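(* Let $\mathcal{C}$ be a pre-Hilbert $*$-category and let $(s_k\colon A_k\to X)_{k=1}^n$ be a split wide cospan in $\mathcal{C}$. Then the equations \[ t_1=s_1, \qquad t_{m+1} = s_{m+1} - \sum_{k=1}^m t_k (t_k^* t_k)^{-1} t_k^* s_{m+1} \] recursively define an orthogonal wide cospan $(t_k\colon A_k\to X)_{k=1}^n$ of closed monomorphisms such that $t_1\cup t_2\cup\dots\cup t_m = s_1\cup s_2\cup\dots\cup s_m$ (as subobjects of $X$) for each $m\in\{1,\dots,n\}$.
   Context: A $*$-category is a category with a choice of $f^*\colon Y\to X$ for each $f\colon X\to Y$ such that $1^*=1$, $(gf)^*=f^*g^*$, $(f^* )^*=f$. A morphism $f$ is an isometry if $f^*f=1$. An orthonormal biproduct is a biproduct $(X,s_1,r_1,s_2,r_2)$ with $r_k=s_k^*$. A pre-Hilbert $*$-category is a $*$-category with (R1) a zero object, (R2) orthonormal biproducts of all pairs of objects, (R3) an isometric kernel (isometric equaliser with the zero morphism) for every morphism, and (R4) every diagonal $\Delta\colon X\to X\oplus X$ a kernel of some morphism. A pre-Hilbert $*$-category is additive (enriched in abelian groups via its biproducts), which gives the subtraction and sums used. A closed monomorphism is a morphism $f$ with $f^*f$ invertible. A wide cospan $(s_k\colon A_k\to X)_{k=1}^n$ is a finite family of morphisms with common codomain; a retraction of it is a family $(r_k\colon X\to A_k)_{k=1}^n$ with $r_ks_j = 1$ if $j=k$ and $0$ otherwise; the cospan is split if it has a retraction. It is orthogonal if $s_j^*s_k=0$ for all $j\neq k$. The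 union of subobjects is their supremum in the poset of subobjects of $X$; the union of (subobjects represented by) the legs of a split cospan exists and is represented by $\begin{bmatrix}s_1&\cdots&s_n\end{bmatrix}\colon A_1\oplus\dots\oplus A_n\to X$. *)

theory Defs
  imports Main
begin

text \<open>A category is given by a set of objects, a set of arrows, source and target maps,
a composition (comp g f = g after f, meaningful when tgt f = src g), identities and
a dagger operation star.\<close>

record ('o, 'm) starcat =
  Obj  :: "'o set"
  Arr  :: "'m set"
  src  :: "'m \<Rightarrow> 'o"
  tgt  :: "'m \<Rightarrow> 'o"
  comp :: "'m \<Rightarrow> 'm \<Rightarrow> 'm"
  idm  :: "'o \<Rightarrow> 'm"
  star :: "'m \<Rightarrow> 'm"

definition hom :: "('o,'m) starcat \<Rightarrow> 'o \<Rightarrow> 'o \<Rightarrow> 'm set" where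
  "hom C X Y = {f \<in> Arr C. src C f = X \<and> tgt C f = Y}"

definition star_category :: "('o,'m) starcat \<Rightarrow> bool" where
  "star_category C \<longleftrightarrow>
     (\<forall>f\<in>Arr C. src C f \<in> Obj C \<and> tgt C f \<in> Obj C) \<and>
     (\<forall>X\<in>Obj C. idm C X \<in> hom C X X) \<and>
     (\<forall>f\<in>Arr C. \<forall>g\<in>Arr C. tgt C f = src C g \<longrightarrow>
        comp C g f \<in> hom C (src C f) (tgt C g)) \<and>
     (\<forall>f\<in>Arr C. \<forall>g\<in>Arr C. \<forall>h\<in>Arr C. tgt C f = src C g \<and> tgt C g = src C h \<longrightarrow>
        comp C h (comp C g f) = comp C (comp C h g) f) \<and>
     (\<forall>f\<in>Arr C. comp C f (idm C (src C f)) = f \<and> comp C (idm C (tgt C f)) f = f) \<and>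
     (\<forall>f\<in>Arr C. star C f \<in> hom C (tgt C f) (src C f)) \<and>
     (\<forall>X\<in>Obj C. star C (idm C X) = idm C X) \<and>
     (\<forall>f\<in>Arr C. \<forall>g\<in>Arr C. tgt C f = src C g \<longrightarrow>
        star C (comp C g f) = comp C (star C f) (star C g)) \<and>
     (\<forall>f\<in>Arr C. star C (star C f) = f)"

definition zero_object :: "('o,'m) starcat \<Rightarrow> 'o \<Rightarrow> bool" where
  "zero_object C Z \<longleftrightarrow> Z \<in> Obj C \<and>
     (\<forall>X\<in>Obj C. (\<exists>!f. f \<in> hom C X Z) \<and> (\<exists>!f. f \<in> hom C Z X))"

definition zm :: "('o,'m) starcat \<Rightarrow> 'o \<Rightarrow> 'o \<Rightarrow> 'm" where
  "zm C X Y = (SOME f. f \<in> hom C X Y \<and>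
     (\<exists>Z g h. zero_object C Z \<and> g \<in> hom C X Z \<and> h \<in> hom C Z Y \<and> f = comp C h g))"

definition invertible :: "('o,'m) starcat \<Rightarrow> 'm \<Rightarrow> bool" where
  "invertible C f \<longleftrightarrow> f \<in> Arr C \<and> (\<exists>g\<in>hom C (tgt C f) (src C f).
     comp C g f = idm C (src C f) \<and> comp C f g = idm C (tgt C f))"

definition inv_mor :: "('o,'m) starcat \<Rightarrow> 'm \<Rightarrow> 'm" where
  "inv_mor C f = (THE g. g \<in> hom C (tgt C f) (src C f) \<and>
     comp C g f = idm C (src C f) \<and> comp C f g = idm C (tgt C f))"

definition isometry :: "('o,'m) starcat \<Rightarrow> 'm \<Rightarrow> bool" where
  "isometry C f \<longleftrightarrow> f \<in> Arr C \<and> comp C (star C f) f = idm C (src C f)"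

definition mono :: "('o,'m) starcat \<Rightarrow> 'm \<Rightarrow> bool" where
  "mono C f \<longleftrightarrow> f \<in> Arr C \<and> (\<forall>g\<in>Arr C. \<forall>h\<in>Arr C.
     tgt C g = src C f \<and> tgt C h = src C f \<and> src C g = src C h \<and> comp C f g = comp C f h
     \<longrightarrow> g = h)"

definition closed_mono :: "('o,'m) starcat \<Rightarrow> 'm \<Rightarrow> bool" where
  "closed_mono C f \<longleftrightarrow> f \<in> Arr C \<and> invertible C (comp C (star C f) f)"

definition biproduct :: "('o,'m) starcat \<Rightarrow> 'o \<Rightarrow> 'o \<Rightarrow> 'o \<Rightarrow> 'm \<Rightarrow> 'm \<Rightarrow> 'm \<Rightarrow> 'm \<Rightarrow> bool" where
  "biproduct C A B S s1 r1 s2 r2 \<longleftrightarrow>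
     S \<in> Obj C \<and>
     s1 \<in> hom C A S \<and> r1 \<in> hom C S A \<and> s2 \<in> hom C B S \<and> r2 \<in> hom C S B \<and>
     comp C r1 s1 = idm C A \<and> comp C r2 s2 = idm C B \<and>
     comp C r2 s1 = zm C A B \<and> comp C r1 s2 = zm C B A \<and>
     (\<forall>Y\<in>Obj C. \<forall>f\<in>hom C Y A. \<forall>g\<in>hom C Y B.
        \<exists>!h. h \<in> hom C Y S \<and> comp C r1 h = f \<and> comp C r2 h = g) \<and>
     (\<forall>Y\<in>Obj C. \<forall>f\<in>hom C A Y. \<forall>g\<in>hom C B Y.
        \<exists>!h. h \<in> hom C S Y \<and> comp C h s1 = f \<and> comp C h s2 = g)"

definition orthonormal_biproduct :: "('o,'m) starcat \<Rightarrow> 'o \<Rightarrow> 'o \<Rightarrow> 'o \<Rightarrow> 'm \<Rightarrow> 'm \<Rightarrow> bool" where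
  "orthonormal_biproduct C A B S s1 s2 \<longleftrightarrow>
     biproduct C A B S s1 (star C s1) s2 (star C s2)"

definition kernel :: "('o,'m) starcat \<Rightarrow> 'm \<Rightarrow> 'm \<Rightarrow> bool" where
  "kernel C f k \<longleftrightarrow> f \<in> Arr C \<and> k \<in> Arr C \<and> tgt C k = src C f \<and>
     comp C f k = zm C (src C k) (tgt C f) \<and>
     (\<forall>g\<in>Arr C. tgt C g = src C f \<and> comp C f g = zm C (src C g) (tgt C f) \<longrightarrow>
        (\<exists>!h. h \<in> hom C (src C g) (src C k) \<and> comp C k h = g))"

definition pre_hilbert :: "('o,'m) starcat \<Rightarrow> bool" where
  "pre_hilbert C \<longleftrightarrow> star_category C \<and>
     \<comment> \<open>(R1)\<close> (\<exists>Z. zero_object C Z) \<and>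
     \<comment> \<open>(R2)\<close> (\<forall>A\<in>Obj C. \<forall>B\<in>Obj C. \<exists>S s1 s2. orthonormal_biproduct C A B S s1 s2) \<and>
     \<comment> \<open>(R3)\<close> (\<forall>f\<in>Arr C. \<exists>k. kernel C f k \<and> isometry C k) \<and>
     \<comment> \<open>(R4)\<close> (\<forall>X\<in>Obj C. \<forall>S s1 s2 d. orthonormal_biproduct C X X S s1 s2 \<and>
          d \<in> hom C X S \<and> comp C (star C s1) d = idm C X \<and> comp C (star C s2) d = idm C X
          \<longrightarrow> (\<exists>f. kernel C f d))"

definition add_mor :: "('o,'m) starcat \<Rightarrow> 'm \<Rightarrow> 'm \<Rightarrow> 'm" where
  "add_mor C f g =
    (let X = src C f; Y = tgt C f;
         (S, s1, r1, s2, r2) = (SOME (S, s1, r1, s2, r2). biproduct C Y Y S s1 r1 s2 r2);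
         p = (THE p. p \<in> hom C X S \<and> comp C r1 p = f \<and> comp C r2 p = g);
         c = (THE c. c \<in> hom C S Y \<and> comp C c s1 = idm C Y \<and> comp C c s2 = idm C Y)
     in comp C c p)"

definition sub_mor :: "('o,'m) starcat \<Rightarrow> 'm \<Rightarrow> 'm \<Rightarrow> 'm" where
  "sub_mor C f g = (THE h. h \<in> hom C (src C f) (tgt C f) \<and> add_mor C h g = f)"

definition sum_mor :: "('o,'m) starcat \<Rightarrow> 'o \<Rightarrow> 'o \<Rightarrow> 'm list \<Rightarrow> 'm" where
  "sum_mor C X Y fs = foldr (add_mor C) fs (zm C X Y)"

definition proj_mor :: "('o,'m) starcat \<Rightarrow> 'm \<Rightarrow> 'm" where
  "proj_mor C t = comp C t (comp C (inv_mor C (comp C (star C t) t)) (star C t))"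

fun gs_list :: "('o,'m) starcat \<Rightarrow> (nat \<Rightarrow> 'm) \<Rightarrow> nat \<Rightarrow> 'm list" where
  "gs_list C s 0 = [s 0]"
| "gs_list C s (Suc m) =
     (let ts = gs_list C s m;
          x = s (Suc m)
      in ts @ [sub_mor C x (sum_mor C (src C x) (tgt C x)
                  (map (\<lambda>t. comp C (proj_mor C t) x) ts))])"

text \<open>gram_schmidt C s k is t_{k+1} in the paper's 1-based numbering.\<close>
definition gram_schmidt :: "('o,'m) starcat \<Rightarrow> (nat \<Rightarrow> 'm) \<Rightarrow> nat \<Rightarrow> 'm" where
  "gram_schmidt C s k = last (gs_list C s k)"

definition wide_cospan :: "('o,'m) starcat \<Rightarrow> nat \<Rightarrow> (nat \<Rightarrow> 'o) \<Rightarrow> 'o \<Rightarrow> (nat \<Rightarrow> 'm) \<Rightarrow> bool" where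
  "wide_cospan C n A X s \<longleftrightarrow> (\<forall>k<n. s k \<in> hom C (A k) X)"

definition split_cospan :: "('o,'m) starcat \<Rightarrow> nat \<Rightarrow> (nat \<Rightarrow> 'o) \<Rightarrow> 'o \<Rightarrow> (nat \<Rightarrow> 'm) \<Rightarrow> bool" where
  "split_cospan C n A X s \<longleftrightarrow> wide_cospan C n A X s \<and>
     (\<exists>r. (\<forall>k<n. r k \<in> hom C X (A k)) \<and>
          (\<forall>k<n. \<forall>j<n. comp C (r k) (s j) = (if j = k then idm C (A k) else zm C (A j) (A k))))"

definition orthogonal_cospan :: "('o,'m) starcat \<Rightarrow> nat \<Rightarrow> (nat \<Rightarrow> 'o) \<Rightarrow> 'o \<Rightarrow> (nat \<Rightarrow> 'm) \<Rightarrow> bool" where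
  "orthogonal_cospan C n A X s \<longleftrightarrow> wide_cospan C n A X s \<and>
     (\<forall>j<n. \<forall>k<n. j \<noteq> k \<longrightarrow> comp C (star C (s j)) (s k) = zm C (A k) (A j))"

definition subobj_le :: "('o,'m) starcat \<Rightarrow> 'm \<Rightarrow> 'm \<Rightarrow> bool" where
  "subobj_le C f g \<longleftrightarrow> tgt C f = tgt C g \<and> (\<exists>h\<in>hom C (src C f) (src C g). comp C g h = f)"

definition is_union :: "('o,'m) starcat \<Rightarrow> 'o \<Rightarrow> nat \<Rightarrow> (nat \<Rightarrow> 'm) \<Rightarrow> 'm \<Rightarrow> bool" where
  "is_union C X m F u \<longleftrightarrow> mono C u \<and> tgt C u = X \<and> (\<forall>k<m. subobj_le C (F k) u) \<and>
     (\<forall>v. mono C v \<and> tgt C v = X \<and> (\<forall>k<m. subobj_le C (F k) v) \<longrightarrow> subobj_le C u v)"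

end

theory Submission
  imports Defs
begin


locale PH =
  fixes C :: "('o,'m) starcat"
  assumes ph: "pre_hilbert C"
begin

abbreviation cp (infixr "\<cdot>" 75) where "g \<cdot> f \<equiv> comp C g f"
abbreviation arr where "arr f \<equiv> f \<in> Arr C"
abbreviation ob where "ob X \<equiv> X \<in> Obj C"
abbreviation sr where "sr f \<equiv> src C f"
abbreviation tg where "tg f \<equiv> tgt C f"
abbreviation st where "st f \<equiv> star C f"
abbreviation one where "one X \<equiv> idm C X"
abbreviation zr where "zr X Y \<equiv> zm C X Y"

lemma sc: "star_category C" using ph unfolding pre_hilbert_def by blast

lemma arr_obj[simp]: "arr f \<Longrightarrow> ob (sr f)" "arr f \<Longrightarrow> ob (tg f)"
  using sc unfolding star_category_def by auto

lemma id_arr[simp]: "ob X \<Longrightarrow> arr (one X)" "ob X \<Longrightarrow> sr (one X) = X" "ob X \<Longrightarrow> tg (one X) = X"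
  using sc unfolding star_category_def hom_def by auto

lemma comp_arr[simp]: "arr f \<Longrightarrow> arr g \<Longrightarrow> tg f = sr g \<Longrightarrow> arr (g \<cdot> f)"
  "arr f \<Longrightarrow> arr g \<Longrightarrow> tg f = sr g \<Longrightarrow> sr (g \<cdot> f) = sr f"
  "arr f \<Longrightarrow> arr g \<Longrightarrow> tg f = sr g \<Longrightarrow> tg (g \<cdot> f) = tg g"
  using sc unfolding star_category_def hom_def by auto

lemma assoc: "arr f \<Longrightarrow> arr g \<Longrightarrow> arr h \<Longrightarrow> tg f = sr g \<Longrightarrow> tg g = sr h \<Longrightarrow>
   (h \<cdot> g) \<cdot> f = h \<cdot> (g \<cdot> f)"
  using sc unfolding star_category_def by metis

lemma id_l[simp]: "arr f \<Longrightarrow> tg f = Y \<Longrightarrow> one Y \<cdot> f = f"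
  and id_r[simp]: "arr f \<Longrightarrow> sr f = X \<Longrightarrow> f \<cdot> one X = f"
  using sc unfolding star_category_def by auto

lemma st_arr[simp]: "arr f \<Longrightarrow> arr (st f)" "arr f \<Longrightarrow> sr (st f) = tg f" "arr f \<Longrightarrow> tg (st f) = sr f"
  using sc unfolding star_category_def hom_def by auto

lemma st_id[simp]: "ob X \<Longrightarrow> st (one X) = one X"
  and st_st[simp]: "arr f \<Longrightarrow> st (st f) = f"
  using sc unfolding star_category_def by auto

lemma st_comp[simp]: "arr f \<Longrightarrow> arr g \<Longrightarrow> tg f = sr g \<Longrightarrow> st (g \<cdot> f) = st f \<cdot> st g"
  using sc unfolding star_category_def by auto

lemma homI: "arr f \<Longrightarrow> sr f = X \<Longrightarrow> tg f = Y \<Longrightarrow> f \<in> hom C X Y"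
  by (simp add: hom_def)
lemma homD: "f \<in> hom C X Y \<Longrightarrow> arr f" "f \<in> hom C X Y \<Longrightarrow> sr f = X" "f \<in> hom C X Y \<Longrightarrow> tg f = Y"
  by (auto simp: hom_def)

subsection \<open>Zero morphisms\<close>

definition Z0 where "Z0 = (SOME Z. zero_object C Z)"

lemma Z0: "zero_object C Z0"
  using ph unfolding pre_hilbert_def Z0_def by (metis someI_ex)

lemma Z0_ob[simp]: "ob Z0" using Z0 unfolding zero_object_def by blast

lemma zero_hom_unique: "zero_object C Z \<Longrightarrow> ob X \<Longrightarrow> f \<in> hom C X Z \<Longrightarrow> g \<in> hom C X Z \<Longrightarrow> f = g"
  "zero_object C Z \<Longrightarrow> ob X \<Longrightarrow> f \<in> hom C Z X \<Longrightarrow> g \<in> hom C Z X \<Longrightarrow> f = g"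
  unfolding zero_object_def by blast+

lemma zero_hom_ex: "zero_object C Z \<Longrightarrow> ob X \<Longrightarrow> \<exists>f. f \<in> hom C X Z"
  "zero_object C Z \<Longrightarrow> ob X \<Longrightarrow> \<exists>f. f \<in> hom C Z X"
  unfolding zero_object_def by blast+

definition toZ where "toZ X = (SOME f. f \<in> hom C X Z0)"
definition fromZ where "fromZ X = (SOME f. f \<in> hom C Z0 X)"

lemma toZ: "ob X \<Longrightarrow> toZ X \<in> hom C X Z0"
  unfolding toZ_def by (metis someI_ex zero_hom_ex(1)[OF Z0])
lemma fromZ: "ob X \<Longrightarrow> fromZ X \<in> hom C Z0 X"
  unfolding fromZ_def by (metis someI_ex zero_hom_ex(2)[OF Z0])

lemma toZ_arr[simp]: "ob X \<Longrightarrow> arr (toZ X)" "ob X \<Longrightarrow> sr (toZ X) = X" "ob X \<Longrightarrow> tg (toZ X) = Z0"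
  using toZ by (auto dest: homD)
lemma fromZ_arr[simp]: "ob X \<Longrightarrow> arr (fromZ X)" "ob X \<Longrightarrow> sr (fromZ X) = Z0" "ob X \<Longrightarrow> tg (fromZ X) = X"
  using fromZ by (auto dest: homD)

lemma through_zero:
  assumes Z: "zero_object C Z" and g: "g \<in> hom C X Z" and h: "h \<in> hom C Z Y"
  shows "h \<cdot> g = fromZ Y \<cdot> toZ X"
proof -
  have X: "ob X" and Y: "ob Y" and Zo: "ob Z" using g h by (metis arr_obj homD)+
  obtain \<phi> where phi: "\<phi> \<in> hom C Z0 Z" using zero_hom_ex(2)[OF Z0 Zo] by blast
  have "g = \<phi> \<cdot> toZ X"
    apply (rule zero_hom_unique(1)[OF Z X g])
    using phi X by (auto simp: hom_def)
  moreover have "h \<cdot> \<phi> = fromZ Y"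
    apply (rule zero_hom_unique(2)[OF Z0 Y])
    using phi h Y by (auto simp: hom_def)
  ultimately show ?thesis using phi toZ[OF X] h
    by (metis assoc homD)
qed

lemma zm_char: assumes "ob X" "ob Y" shows "zr X Y = fromZ Y \<cdot> toZ X"
proof -
  have ex: "\<exists>f. f \<in> hom C X Y \<and>
     (\<exists>Z g h. zero_object C Z \<and> g \<in> hom C X Z \<and> h \<in> hom C Z Y \<and> f = h \<cdot> g)"
  proof -
    have "zero_object C Z0 \<and> toZ X \<in> hom C X Z0 \<and> fromZ Y \<in> hom C Z0 Y \<and> fromZ Y \<cdot> toZ X \<in> hom C X Y"
      using assms Z0 by (simp add: hom_def)
    then show ?thesis by blast
  qed
  show ?thesis using someI_ex[OF ex] unfolding zm_def[symmetric] by (auto intro: through_zero)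
qed

lemma zm_arr[simp]: "ob X \<Longrightarrow> ob Y \<Longrightarrow> arr (zr X Y)" "ob X \<Longrightarrow> ob Y \<Longrightarrow> sr (zr X Y) = X"
  "ob X \<Longrightarrow> ob Y \<Longrightarrow> tg (zr X Y) = Y"
  using zm_char toZ fromZ by (auto dest: homD)

lemma zm_comp_l[simp]: "arr f \<Longrightarrow> sr f = Y \<Longrightarrow> ob X \<Longrightarrow> f \<cdot> zr X Y = zr X (tg f)"
proof -
  assume f: "arr f" "sr f = Y" and X: "ob X"
  have Y: "ob Y" using f by auto
  have "f \<cdot> zr X Y = (f \<cdot> fromZ Y) \<cdot> toZ X"
    using zm_char[OF X Y] f X by (auto intro!: assoc[symmetric])
  also have "\<dots> = zr X (tg f)"
    using f toZ[OF X] fromZ[OF Y] by (subst through_zero[OF Z0]) (auto intro!: homI dest: homD simp: zm_char X)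
  finally show ?thesis .
qed

lemma zm_comp_r[simp]: "arr f \<Longrightarrow> tg f = X \<Longrightarrow> ob Y \<Longrightarrow> zr X Y \<cdot> f = zr (sr f) Y"
proof -
  assume f: "arr f" "tg f = X" and Y: "ob Y"
  have X: "ob X" using f by auto
  have "zr X Y \<cdot> f = fromZ Y \<cdot> (toZ X \<cdot> f)"
    using zm_char[OF X Y] f Y by (auto intro!: assoc)
  also have "\<dots> = zr (sr f) Y"
    using f toZ[OF X] fromZ[OF Y] by (subst through_zero[OF Z0]) (auto intro!: homI dest: homD simp: zm_char Y)
  finally show ?thesis .
qed

lemma st_zm[simp]: "ob X \<Longrightarrow> ob Y \<Longrightarrow> st (zr X Y) = zr Y X"
proof -
  assume X: "ob X" and Y: "ob Y"
  have "st (zr X Y) = st (toZ X) \<cdot> st (fromZ Y)"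
    using zm_char[OF X Y] X Y by simp
  also have "\<dots> = zr Y X"
    using toZ[OF X] fromZ[OF Y] by (subst through_zero[OF Z0]) (auto intro!: homI dest: homD simp: zm_char X Y)
  finally show ?thesis .
qed

end

context PH begin

lemma hom_iff: "f \<in> hom C X Y \<longleftrightarrow> arr f \<and> sr f = X \<and> tg f = Y" by (simp add: hom_def)

definition pairing where
  "pairing S r1 r2 f g = (THE p. p \<in> hom C (sr f) S \<and> r1 \<cdot> p = f \<and> r2 \<cdot> p = g)"
definition copairing where
  "copairing S s1 s2 f g = (THE c. c \<in> hom C S (tg f) \<and> c \<cdot> s1 = f \<and> c \<cdot> s2 = g)"

context
  fixes A B S s1 r1 s2 r2
  assumes B: "biproduct C A B S s1 r1 s2 r2"
begin

lemma bp_arr: "arr s1" "arr s2" "arr r1" "arr r2" "sr s1 = A" "tg s1 = S" "sr s2 = B" "tg s2 = S"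
  "sr r1 = S" "tg r1 = A" "sr r2 = S" "tg r2 = B" "ob A" "ob B" "ob S"
proof -
  have "ob S \<and> s1 \<in> hom C A S \<and> r1 \<in> hom C S A \<and> s2 \<in> hom C B S \<and> r2 \<in> hom C S B"
    using B unfolding biproduct_def by (elim conjE) (intro conjI)
  then show "arr s1" "arr s2" "arr r1" "arr r2" "sr s1 = A" "tg s1 = S" "sr s2 = B" "tg s2 = S"
  "sr r1 = S" "tg r1 = A" "sr r2 = S" "tg r2 = B" "ob A" "ob B" "ob S"
    unfolding hom_def by (auto dest: arr_obj)
qed

lemma bp_eq: "r1 \<cdot> s1 = one A" "r2 \<cdot> s2 = one B" "r2 \<cdot> s1 = zr A B" "r1 \<cdot> s2 = zr B A"
proof -
  have "r1 \<cdot> s1 = one A \<and> r2 \<cdot> s2 = one B \<and> r2 \<cdot> s1 = zr A B \<and> r1 \<cdot> s2 = zr B A"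
    using B unfolding biproduct_def by (elim conjE) (intro conjI)
  then show "r1 \<cdot> s1 = one A" "r2 \<cdot> s2 = one B" "r2 \<cdot> s1 = zr A B" "r1 \<cdot> s2 = zr B A" by blast+
qed

lemma pair_ex1: "ob Y \<Longrightarrow> f \<in> hom C Y A \<Longrightarrow> g \<in> hom C Y B \<Longrightarrow> \<exists>!h. h \<in> hom C Y S \<and> r1 \<cdot> h = f \<and> r2 \<cdot> h = g"
proof -
  assume a: "ob Y" "f \<in> hom C Y A" "g \<in> hom C Y B"
  have "\<forall>Y\<in>Obj C. \<forall>f\<in>hom C Y A. \<forall>g\<in>hom C Y B. \<exists>!h. h \<in> hom C Y S \<and> r1 \<cdot> h = f \<and> r2 \<cdot> h = g"
    using B unfolding biproduct_def by (elim conjE)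
  then show ?thesis using a by blast
qed
lemma copair_ex1: "ob Y \<Longrightarrow> f \<in> hom C A Y \<Longrightarrow> g \<in> hom C B Y \<Longrightarrow> \<exists>!h. h \<in> hom C S Y \<and> h \<cdot> s1 = f \<and> h \<cdot> s2 = g"
proof -
  assume a: "ob Y" "f \<in> hom C A Y" "g \<in> hom C B Y"
  have "\<forall>Y\<in>Obj C. \<forall>f\<in>hom C A Y. \<forall>g\<in>hom C B Y. \<exists>!h. h \<in> hom C S Y \<and> h \<cdot> s1 = f \<and> h \<cdot> s2 = g"
    using B unfolding biproduct_def by (elim conjE)
  then show ?thesis using a by blast
qed

lemma pair:
  assumes "arr f" "arr g" "sr g = sr f" "tg f = A" "tg g = B"
  shows "arr (pairing S r1 r2 f g)" "sr (pairing S r1 r2 f g) = sr f" "tg (pairing S r1 r2 f g) = S"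
    "r1 \<cdot> pairing S r1 r2 f g = f" "r2 \<cdot> pairing S r1 r2 f g = g"
proof -
  have e: "\<exists>!h. h \<in> hom C (sr f) S \<and> r1 \<cdot> h = f \<and> r2 \<cdot> h = g"
    using assms by (intro pair_ex1) (auto simp: hom_def)
  have "pairing S r1 r2 f g \<in> hom C (sr f) S \<and> r1 \<cdot> pairing S r1 r2 f g = f \<and> r2 \<cdot> pairing S r1 r2 f g = g"
    unfolding pairing_def by (rule theI'[OF e])
  then show "arr (pairing S r1 r2 f g)" "sr (pairing S r1 r2 f g) = sr f" "tg (pairing S r1 r2 f g) = S"
    "r1 \<cdot> pairing S r1 r2 f g = f" "r2 \<cdot> pairing S r1 r2 f g = g" by (auto simp: hom_def)
qed

lemma ext_in:
  assumes "arr p" "arr q" "tg p = S" "tg q = S" "sr p = sr q" "r1 \<cdot> p = r1 \<cdot> q" "r2 \<cdot> p = r2 \<cdot> q"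
  shows "p = q"
proof -
  have e: "\<exists>!h. h \<in> hom C (sr p) S \<and> r1 \<cdot> h = r1 \<cdot> p \<and> r2 \<cdot> h = r2 \<cdot> p"
    using assms bp_arr by (intro pair_ex1) (auto simp: hom_def)
  have P: "p \<in> hom C (sr p) S \<and> r1 \<cdot> p = r1 \<cdot> p \<and> r2 \<cdot> p = r2 \<cdot> p" using assms by (simp add: hom_def)
  have Q: "q \<in> hom C (sr p) S \<and> r1 \<cdot> q = r1 \<cdot> p \<and> r2 \<cdot> q = r2 \<cdot> p" using assms by (simp add: hom_def)
  show ?thesis using e P Q by blast
qed

lemma pair_uniq:
  assumes "arr p" "tg p = S" "r1 \<cdot> p = f" "r2 \<cdot> p = g"
  shows "pairing S r1 r2 f g = p"
proof -
  have f: "arr (r1 \<cdot> p)" "sr (r1 \<cdot> p) = sr p" "tg (r1 \<cdot> p) = A" "arr (r2 \<cdot> p)" "sr (r2 \<cdot> p) = sr p" "tg (r2 \<cdot> p) = B"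
    using assms(1,2) bp_arr by simp_all
  have "pairing S r1 r2 (r1 \<cdot> p) (r2 \<cdot> p) = p"
    by (rule ext_in) (use pair[of "r1 \<cdot> p" "r2 \<cdot> p"] f assms(1,2) in simp_all)
  then show ?thesis using assms by simp
qed

lemma copair:
  assumes "arr f" "arr g" "tg g = tg f" "sr f = A" "sr g = B"
  shows "arr (copairing S s1 s2 f g)" "sr (copairing S s1 s2 f g) = S" "tg (copairing S s1 s2 f g) = tg f"
    "copairing S s1 s2 f g \<cdot> s1 = f" "copairing S s1 s2 f g \<cdot> s2 = g"
proof -
  have e: "\<exists>!h. h \<in> hom C S (tg f) \<and> h \<cdot> s1 = f \<and> h \<cdot> s2 = g"
    using assms by (intro copair_ex1) (auto simp: hom_def)
  have "copairing S s1 s2 f g \<in> hom C S (tg f) \<and> copairing S s1 s2 f g \<cdot> s1 = f \<and> copairing S s1 s2 f g \<cdot> s2 = g"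
    unfolding copairing_def by (rule theI'[OF e])
  then show "arr (copairing S s1 s2 f g)" "sr (copairing S s1 s2 f g) = S" "tg (copairing S s1 s2 f g) = tg f"
    "copairing S s1 s2 f g \<cdot> s1 = f" "copairing S s1 s2 f g \<cdot> s2 = g" by (auto simp: hom_def)
qed

lemma ext_out:
  assumes "arr p" "arr q" "sr p = S" "sr q = S" "tg p = tg q" "p \<cdot> s1 = q \<cdot> s1" "p \<cdot> s2 = q \<cdot> s2"
  shows "p = q"
proof -
  have e: "\<exists>!h. h \<in> hom C S (tg p) \<and> h \<cdot> s1 = p \<cdot> s1 \<and> h \<cdot> s2 = p \<cdot> s2"
    using assms bp_arr by (intro copair_ex1) (auto simp: hom_def)
  have P: "p \<in> hom C S (tg p) \<and> p \<cdot> s1 = p \<cdot> s1 \<and> p \<cdot> s2 = p \<cdot> s2" using assms by (simp add: hom_def)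
  have Q: "q \<in> hom C S (tg p) \<and> q \<cdot> s1 = p \<cdot> s1 \<and> q \<cdot> s2 = p \<cdot> s2" using assms by (simp add: hom_def)
  show ?thesis using e P Q by blast
qed

lemma copair_uniq:
  assumes "arr p" "sr p = S" "p \<cdot> s1 = f" "p \<cdot> s2 = g"
  shows "copairing S s1 s2 f g = p"
proof -
  have f: "arr (p \<cdot> s1)" "tg (p \<cdot> s1) = tg p" "sr (p \<cdot> s1) = A" "arr (p \<cdot> s2)" "tg (p \<cdot> s2) = tg p" "sr (p \<cdot> s2) = B"
    using assms(1,2) bp_arr by simp_all
  have "copairing S s1 s2 (p \<cdot> s1) (p \<cdot> s2) = p"
    by (rule ext_out) (use copair[of "p \<cdot> s1" "p \<cdot> s2"] f assms(1,2) in simp_all)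
  then show ?thesis using assms by simp
qed

end

definition plus1 where
  "plus1 S s1 r1 s2 r2 f g = copairing S s1 s2 (one (tg f)) (one (tg f)) \<cdot> pairing S r1 r2 f g"
definition plus2 where
  "plus2 S s1 r1 s2 r2 f g = copairing S s1 s2 f g \<cdot> pairing S r1 r2 (one (sr f)) (one (sr f))"

context
  fixes X Y SX x1 p1 x2 p2 SY y1 q1 y2 q2
  assumes BX: "biproduct C X X SX x1 p1 x2 p2" and BY: "biproduct C Y Y SY y1 q1 y2 q2"
begin

lemma plus_arr:
  assumes "arr f" "arr g" "sr f = X" "sr g = X" "tg f = Y" "tg g = Y"
  shows "arr (plus1 SY y1 q1 y2 q2 f g)" "sr (plus1 SY y1 q1 y2 q2 f g) = X" "tg (plus1 SY y1 q1 y2 q2 f g) = Y"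
   "arr (plus2 SX x1 p1 x2 p2 f g)" "sr (plus2 SX x1 p1 x2 p2 f g) = X" "tg (plus2 SX x1 p1 x2 p2 f g) = Y"
  using assms bp_arr[OF BX] bp_arr[OF BY] pair[OF BY, of f g] copair[OF BY, of "one Y" "one Y"]
    pair[OF BX, of "one X" "one X"] copair[OF BX, of f g]
  unfolding plus1_def plus2_def by auto

lemma unit1:
  assumes f: "arr f" "sr f = X" "tg f = Y"
  shows "plus1 SY y1 q1 y2 q2 f (zr X Y) = f" "plus1 SY y1 q1 y2 q2 (zr X Y) f = f"
proof -
  note a = bp_arr[OF BY] bp_eq[OF BY]
  have X: "ob X" using f by auto
  have "pairing SY q1 q2 f (zr X Y) = y1 \<cdot> f"
    apply (rule pair_uniq[OF BY]) using a f X by (auto simp: assoc[symmetric])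
  moreover have "pairing SY q1 q2 (zr X Y) f = y2 \<cdot> f"
    apply (rule pair_uniq[OF BY]) using a f X by (auto simp: assoc[symmetric])
  ultimately show "plus1 SY y1 q1 y2 q2 f (zr X Y) = f" "plus1 SY y1 q1 y2 q2 (zr X Y) f = f"
    unfolding plus1_def using a f X copair[OF BY, of "one Y" "one Y"] by (auto simp: assoc[symmetric])
qed

lemma unit2:
  assumes f: "arr f" "sr f = X" "tg f = Y"
  shows "plus2 SX x1 p1 x2 p2 f (zr X Y) = f" "plus2 SX x1 p1 x2 p2 (zr X Y) f = f"
proof -
  note a = bp_arr[OF BX] bp_eq[OF BX]
  have Y: "ob Y" using f by auto
  have "copairing SX x1 x2 f (zr X Y) = f \<cdot> p1"
    apply (rule copair_uniq[OF BX]) using a f Y by (auto simp: assoc)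
  moreover have "copairing SX x1 x2 (zr X Y) f = f \<cdot> p2"
    apply (rule copair_uniq[OF BX]) using a f Y by (auto simp: assoc)
  ultimately show "plus2 SX x1 p1 x2 p2 f (zr X Y) = f" "plus2 SX x1 p1 x2 p2 (zr X Y) f = f"
    unfolding plus2_def using a f Y pair[OF BX, of "one X" "one X"] by (auto simp: assoc)
qed

lemma interchange:
  assumes h: "arr a" "sr a = X" "tg a = Y" "arr b" "sr b = X" "tg b = Y"
     "arr c" "sr c = X" "tg c = Y" "arr d" "sr d = X" "tg d = Y"
  shows "plus1 SY y1 q1 y2 q2 (plus2 SX x1 p1 x2 p2 a b) (plus2 SX x1 p1 x2 p2 c d)
       = plus2 SX x1 p1 x2 p2 (plus1 SY y1 q1 y2 q2 a c) (plus1 SY y1 q1 y2 q2 b d)"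
proof -
  note ax = bp_arr[OF BX] bp_eq[OF BX] and ay = bp_arr[OF BY] bp_eq[OF BY]
  define cab where "cab = copairing SX x1 x2 a b"
  define ccd where "ccd = copairing SX x1 x2 c d"
  define M where "M = pairing SY q1 q2 cab ccd"
  define D where "D = pairing SX p1 p2 (one X) (one X)"
  define N where "N = copairing SY y1 y2 (one Y) (one Y)"
  note cab = copair[OF BX, of a b, folded cab_def] and ccd = copair[OF BX, of c d, folded ccd_def]
  note M = pair[OF BY, of cab ccd, folded M_def]
  note D = pair[OF BX, of "one X" "one X", folded D_def]
  note N = copair[OF BY, of "one Y" "one Y", folded N_def]
  have cabs: "arr cab" "sr cab = SX" "tg cab = Y" "cab \<cdot> x1 = a" "cab \<cdot> x2 = b"
    using cab h ax by auto
  have ccds: "arr ccd" "sr ccd = SX" "tg ccd = Y" "ccd \<cdot> x1 = c" "ccd \<cdot> x2 = d"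
    using ccd h ax by auto
  have Ms: "arr M" "sr M = SX" "tg M = SY" "q1 \<cdot> M = cab" "q2 \<cdot> M = ccd"
    using M cabs ccds ay by auto
  have Ds: "arr D" "sr D = X" "tg D = SX" using D ax by auto
  have Ns: "arr N" "sr N = SY" "tg N = Y" "N \<cdot> y1 = one Y" "N \<cdot> y2 = one Y" using N ay by auto
  have L: "plus2 SX x1 p1 x2 p2 a b = cab \<cdot> D" "plus2 SX x1 p1 x2 p2 c d = ccd \<cdot> D"
    unfolding plus2_def cab_def ccd_def D_def using h by auto
  have "pairing SY q1 q2 (cab \<cdot> D) (ccd \<cdot> D) = M \<cdot> D"
    apply (rule pair_uniq[OF BY]) using Ms Ds ay by (auto simp: assoc[symmetric])
  then have lhs: "plus1 SY y1 q1 y2 q2 (plus2 SX x1 p1 x2 p2 a b) (plus2 SX x1 p1 x2 p2 c d) = N \<cdot> (M \<cdot> D)"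
    unfolding L plus1_def N_def using cabs Ds by simp
  have Mx1: "M \<cdot> x1 = pairing SY q1 q2 a c"
    apply (rule pair_uniq[OF BY, symmetric]) using Ms ax ay cabs ccds by (auto simp: assoc[symmetric])
  have Mx2: "M \<cdot> x2 = pairing SY q1 q2 b d"
    apply (rule pair_uniq[OF BY, symmetric]) using Ms ax ay cabs ccds by (auto simp: assoc[symmetric])
  have "copairing SX x1 x2 (plus1 SY y1 q1 y2 q2 a c) (plus1 SY y1 q1 y2 q2 b d) = N \<cdot> M"
    apply (rule copair_uniq[OF BX]) using Ms Ns ax ay h
    by (auto simp: assoc Mx1 Mx2 plus1_def N_def)
  moreover have "sr (plus1 SY y1 q1 y2 q2 a c) = X" using plus_arr h by auto
  ultimately have rhs: "plus2 SX x1 p1 x2 p2 (plus1 SY y1 q1 y2 q2 a c) (plus1 SY y1 q1 y2 q2 b d) = (N \<cdot> M) \<cdot> D"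
    unfolding plus2_def D_def by simp
  show ?thesis unfolding lhs rhs using Ms Ns Ds by (simp add: assoc)
qed

lemma EH:
  assumes "arr f" "sr f = X" "tg f = Y" "arr g" "sr g = X" "tg g = Y"
  shows "plus1 SY y1 q1 y2 q2 f g = plus2 SX x1 p1 x2 p2 f g"
proof -
  have X: "ob X" "ob Y" using assms by auto
  have "plus1 SY y1 q1 y2 q2 f g = plus1 SY y1 q1 y2 q2 (plus2 SX x1 p1 x2 p2 f (zr X Y)) (plus2 SX x1 p1 x2 p2 (zr X Y) g)"
    using unit2 assms by simp
  also have "\<dots> = plus2 SX x1 p1 x2 p2 (plus1 SY y1 q1 y2 q2 f (zr X Y)) (plus1 SY y1 q1 y2 q2 (zr X Y) g)"
    by (rule interchange) (use assms X in auto)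
  also have "\<dots> = plus2 SX x1 p1 x2 p2 f g" using unit1 assms by simp
  finally show ?thesis .
qed

lemma plus_comm:
  assumes "arr f" "sr f = X" "tg f = Y" "arr g" "sr g = X" "tg g = Y"
  shows "plus1 SY y1 q1 y2 q2 f g = plus1 SY y1 q1 y2 q2 g f"
proof -
  have X: "ob X" "ob Y" using assms by auto
  have "plus1 SY y1 q1 y2 q2 f g = plus1 SY y1 q1 y2 q2 (plus2 SX x1 p1 x2 p2 (zr X Y) f) (plus2 SX x1 p1 x2 p2 g (zr X Y))"
    using unit2 assms by simp
  also have "\<dots> = plus2 SX x1 p1 x2 p2 (plus1 SY y1 q1 y2 q2 (zr X Y) g) (plus1 SY y1 q1 y2 q2 f (zr X Y))"
    by (rule interchange) (use assms X in auto)
  also have "\<dots> = plus2 SX x1 p1 x2 p2 g f" using unit1 assms by simp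
  also have "\<dots> = plus1 SY y1 q1 y2 q2 g f" using EH assms by simp
  finally show ?thesis .
qed

lemma plus_assoc:
  assumes "arr f" "sr f = X" "tg f = Y" "arr g" "sr g = X" "tg g = Y" "arr h" "sr h = X" "tg h = Y"
  shows "plus1 SY y1 q1 y2 q2 (plus1 SY y1 q1 y2 q2 f g) h = plus1 SY y1 q1 y2 q2 f (plus1 SY y1 q1 y2 q2 g h)"
proof -
  have X: "ob X" "ob Y" using assms by auto
  have "plus1 SY y1 q1 y2 q2 (plus1 SY y1 q1 y2 q2 f g) h = plus1 SY y1 q1 y2 q2 (plus2 SX x1 p1 x2 p2 f g) (plus2 SX x1 p1 x2 p2 (zr X Y) h)"
    using unit2 EH assms by simp
  also have "\<dots> = plus2 SX x1 p1 x2 p2 (plus1 SY y1 q1 y2 q2 f (zr X Y)) (plus1 SY y1 q1 y2 q2 g h)"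
    by (rule interchange) (use assms X in auto)
  also have "\<dots> = plus2 SX x1 p1 x2 p2 f (plus1 SY y1 q1 y2 q2 g h)" using unit1 assms by simp
  also have "\<dots> = plus1 SY y1 q1 y2 q2 f (plus1 SY y1 q1 y2 q2 g h)" using EH plus_arr assms by simp
  finally show ?thesis .
qed

end

end

context PH begin

abbreviation ad (infixl "\<oplus>" 65) where "f \<oplus> g \<equiv> add_mor C f g"

lemma ob_bp: assumes "ob A" shows "\<exists>S s1 s2. biproduct C A A S s1 (st s1) s2 (st s2)"
proof -
  have "\<forall>A\<in>Obj C. \<forall>B\<in>Obj C. \<exists>S s1 s2. orthonormal_biproduct C A B S s1 s2"
    using ph unfolding pre_hilbert_def by (elim conjE)
  then show ?thesis using assms unfolding orthonormal_biproduct_def by blast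
qed

lemma add_chosen:
  assumes Y: "ob (tg f)"
  shows "\<exists>S s1 r1 s2 r2. biproduct C (tg f) (tg f) S s1 r1 s2 r2 \<and> f \<oplus> g = plus1 S s1 r1 s2 r2 f g"
proof -
  define P where "P = (\<lambda>(S, s1, r1, s2, r2). biproduct C (tg f) (tg f) S s1 r1 s2 r2)"
  obtain S0 t1 t2 where "biproduct C (tg f) (tg f) S0 t1 (st t1) t2 (st t2)" using ob_bp[OF Y] by blast
  then have ex: "\<exists>b. P b" unfolding P_def by (intro exI[of _ "(S0, t1, st t1, t2, st t2)"]) simp
  obtain S s1 r1 s2 r2 where b: "(SOME b. P b) = (S, s1, r1, s2, r2)" by (metis prod_cases5)
  have bp: "biproduct C (tg f) (tg f) S s1 r1 s2 r2" using someI_ex[OF ex] unfolding b by (simp add: P_def)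
  have "f \<oplus> g = plus1 S s1 r1 s2 r2 f g"
    unfolding add_mor_def Let_def plus1_def pairing_def copairing_def
    using b[unfolded P_def] Y by simp
  then show ?thesis using bp by blast
qed

context
  fixes f g X Y
  assumes fg: "arr f" "arr g" "sr f = X" "sr g = X" "tg f = Y" "tg g = Y"
begin

lemma add_eq1:
  assumes BY: "biproduct C Y Y S s1 r1 s2 r2"
  shows "f \<oplus> g = plus1 S s1 r1 s2 r2 f g"
proof -
  obtain S' s1' r1' s2' r2' where BY': "biproduct C Y Y S' s1' r1' s2' r2'" and e: "f \<oplus> g = plus1 S' s1' r1' s2' r2' f g"
    using add_chosen[of f g] fg by auto
  obtain SX x1 x2 where BX: "biproduct C X X SX x1 (st x1) x2 (st x2)" using ob_bp[of X] fg by auto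
  show ?thesis unfolding e using EH[OF BX BY' fg(1,3,5,2,4,6)] EH[OF BX BY fg(1,3,5,2,4,6)] by simp
qed

lemma add_eq2:
  assumes BX: "biproduct C X X S s1 r1 s2 r2"
  shows "f \<oplus> g = plus2 S s1 r1 s2 r2 f g"
proof -
  obtain S' s1' r1' s2' r2' where BY': "biproduct C Y Y S' s1' r1' s2' r2'" and e: "f \<oplus> g = plus1 S' s1' r1' s2' r2' f g"
    using add_chosen[of f g] fg by auto
  show ?thesis unfolding e using EH[OF BX BY' fg(1,3,5,2,4,6)] by simp
qed

lemma add_arr: "arr (f \<oplus> g)" "sr (f \<oplus> g) = X" "tg (f \<oplus> g) = Y"
proof -
  obtain S s1 s2 where BY: "biproduct C Y Y S s1 (st s1) s2 (st s2)" using ob_bp[of Y] fg by auto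
  obtain SX x1 x2 where BX: "biproduct C X X SX x1 (st x1) x2 (st x2)" using ob_bp[of X] fg by auto
  show "arr (f \<oplus> g)" "sr (f \<oplus> g) = X" "tg (f \<oplus> g) = Y"
    using plus_arr[OF BX BY fg] add_eq1[OF BY] by auto
qed

lemma add_comm: "f \<oplus> g = g \<oplus> f"
proof -
  obtain S s1 s2 where BY: "biproduct C Y Y S s1 (st s1) s2 (st s2)" using ob_bp[of Y] fg by auto
  obtain SX x1 x2 where BX: "biproduct C X X SX x1 (st x1) x2 (st x2)" using ob_bp[of X] fg by auto
  show ?thesis
    using add_eq1[OF BY] plus_comm[OF BX BY fg(1,3,5,2,4,6)] PH.add_eq1[OF PH_axioms fg(2,1,4,3,6,5) BY] by simp
qed

end

lemma add_arr_simp[simp]: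
  "arr f \<Longrightarrow> arr g \<Longrightarrow> sr g = sr f \<Longrightarrow> tg g = tg f \<Longrightarrow> arr (f \<oplus> g)"
  "arr f \<Longrightarrow> arr g \<Longrightarrow> sr g = sr f \<Longrightarrow> tg g = tg f \<Longrightarrow> sr (f \<oplus> g) = sr f"
  "arr f \<Longrightarrow> arr g \<Longrightarrow> sr g = sr f \<Longrightarrow> tg g = tg f \<Longrightarrow> tg (f \<oplus> g) = tg f"
  using add_arr[of f g "sr f" "tg f"] by auto

lemma add_assoc:
  assumes "arr f" "arr g" "arr h" "sr g = sr f" "tg g = tg f" "sr h = sr f" "tg h = tg f"
  shows "(f \<oplus> g) \<oplus> h = f \<oplus> (g \<oplus> h)"
proof -
  obtain S s1 s2 where BY: "biproduct C (tg f) (tg f) S s1 (st s1) s2 (st s2)" using ob_bp[of "tg f"] assms by auto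
  obtain SX x1 x2 where BX: "biproduct C (sr f) (sr f) SX x1 (st x1) x2 (st x2)" using ob_bp[of "sr f"] assms by auto
  note e = add_eq1[OF _ _ _ _ _ _ BY] and pa = plus_arr[OF BX BY]
  have fg: "f \<oplus> g = plus1 S s1 (st s1) s2 (st s2) f g" and gh: "g \<oplus> h = plus1 S s1 (st s1) s2 (st s2) g h"
    using e assms by auto
  have "(f \<oplus> g) \<oplus> h = plus1 S s1 (st s1) s2 (st s2) (plus1 S s1 (st s1) s2 (st s2) f g) h"
    unfolding fg using e pa[of f g] assms by auto
  also have "\<dots> = plus1 S s1 (st s1) s2 (st s2) f (plus1 S s1 (st s1) s2 (st s2) g h)"
    using plus_assoc[OF BX BY, of f g h] assms by simp
  also have "\<dots> = f \<oplus> (g \<oplus> h)"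
    unfolding gh using e pa[of g h] assms by auto
  finally show ?thesis .
qed

lemma add_zero[simp]:
  "arr f \<Longrightarrow> sr f = X \<Longrightarrow> tg f = Y \<Longrightarrow> f \<oplus> zr X Y = f"
  "arr f \<Longrightarrow> sr f = X \<Longrightarrow> tg f = Y \<Longrightarrow> zr X Y \<oplus> f = f"
proof -
  assume f: "arr f" "sr f = X" "tg f = Y"
  obtain S s1 s2 where BY: "biproduct C Y Y S s1 (st s1) s2 (st s2)" using ob_bp[of Y] f by auto
  obtain SX x1 x2 where BX: "biproduct C X X SX x1 (st x1) x2 (st x2)" using ob_bp[of X] f by auto
  have X: "ob X" "ob Y" using f by auto
  show "f \<oplus> zr X Y = f" "zr X Y \<oplus> f = f"
    using unit1[OF BX BY f] add_eq1[OF _ _ _ _ _ _ BY] f X by auto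
qed

lemma comp_add_r:
  assumes "arr f" "arr g" "sr g = sr f" "tg g = tg f" "arr k" "tg k = sr f"
  shows "(f \<oplus> g) \<cdot> k = f \<cdot> k \<oplus> g \<cdot> k"
proof -
  obtain S s1 s2 where BY: "biproduct C (tg f) (tg f) S s1 (st s1) s2 (st s2)" using ob_bp[of "tg f"] assms by auto
  note a = bp_arr[OF BY]
  define P where "P = pairing S (st s1) (st s2) f g"
  define N where "N = copairing S s1 s2 (one (tg f)) (one (tg f))"
  note Pp = pair[OF BY, of f g, folded P_def] and Np = copair[OF BY, of "one (tg f)" "one (tg f)", folded N_def]
  have Ps: "arr P" "sr P = sr f" "tg P = S" "st s1 \<cdot> P = f" "st s2 \<cdot> P = g" using Pp assms a by auto
  have Ns: "arr N" "sr N = S" "tg N = tg f" using Np assms a by auto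
  have P: "P \<cdot> k = pairing S (st s1) (st s2) (f \<cdot> k) (g \<cdot> k)"
    apply (rule pair_uniq[OF BY, symmetric]) using Ps a assms by (auto simp: assoc[symmetric])
  have "(f \<oplus> g) \<cdot> k = (N \<cdot> P) \<cdot> k"
    using add_eq1[OF _ _ _ _ _ _ BY, of f g] assms unfolding plus1_def N_def P_def by simp
  also have "\<dots> = N \<cdot> (P \<cdot> k)" using Ps Ns assms by (simp add: assoc)
  also have "\<dots> = plus1 S s1 (st s1) s2 (st s2) (f \<cdot> k) (g \<cdot> k)"
    unfolding P plus1_def N_def using assms by simp
  also have "\<dots> = f \<cdot> k \<oplus> g \<cdot> k"
    using add_eq1[OF _ _ _ _ _ _ BY, of "f \<cdot> k" "g \<cdot> k"] assms by simp
  finally show ?thesis .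
qed

lemma comp_add_l:
  assumes "arr f" "arr g" "sr g = sr f" "tg g = tg f" "arr h" "sr h = tg f"
  shows "h \<cdot> (f \<oplus> g) = h \<cdot> f \<oplus> h \<cdot> g"
proof -
  obtain S s1 s2 where BX: "biproduct C (sr f) (sr f) S s1 (st s1) s2 (st s2)" using ob_bp[of "sr f"] assms by auto
  note a = bp_arr[OF BX]
  define P where "P = copairing S s1 s2 f g"
  define N where "N = pairing S (st s1) (st s2) (one (sr f)) (one (sr f))"
  note Pp = copair[OF BX, of f g, folded P_def] and Np = pair[OF BX, of "one (sr f)" "one (sr f)", folded N_def]
  have Ps: "arr P" "sr P = S" "tg P = tg f" "P \<cdot> s1 = f" "P \<cdot> s2 = g" using Pp assms a by auto
  have Ns: "arr N" "sr N = sr f" "tg N = S" using Np assms a by auto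
  have P: "h \<cdot> P = copairing S s1 s2 (h \<cdot> f) (h \<cdot> g)"
    apply (rule copair_uniq[OF BX, symmetric]) using Ps a assms by (auto simp: assoc)
  have "h \<cdot> (f \<oplus> g) = h \<cdot> (P \<cdot> N)"
    using add_eq2[OF _ _ _ _ _ _ BX, of f g] assms unfolding plus2_def N_def P_def by simp
  also have "\<dots> = (h \<cdot> P) \<cdot> N" using Ps Ns assms by (simp add: assoc)
  also have "\<dots> = plus2 S s1 (st s1) s2 (st s2) (h \<cdot> f) (h \<cdot> g)"
    unfolding P plus2_def N_def using assms by simp
  also have "\<dots> = h \<cdot> f \<oplus> h \<cdot> g"
    using add_eq2[OF _ _ _ _ _ _ BX, of "h \<cdot> f" "h \<cdot> g"] assms by simp
  finally show ?thesis .
qed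

lemma st_add:
  assumes "arr f" "arr g" "sr g = sr f" "tg g = tg f"
  shows "st (f \<oplus> g) = st f \<oplus> st g"
proof -
  obtain S s1 s2 where BY: "biproduct C (tg f) (tg f) S s1 (st s1) s2 (st s2)" using ob_bp[of "tg f"] assms by auto
  note a = bp_arr[OF BY] bp_eq[OF BY]
  define P where "P = pairing S (st s1) (st s2) f g"
  define N where "N = copairing S s1 s2 (one (tg f)) (one (tg f))"
  note Pp = pair[OF BY, of f g, folded P_def] and Np = copair[OF BY, of "one (tg f)" "one (tg f)", folded N_def]
  have Ps: "arr P" "sr P = sr f" "tg P = S" "st s1 \<cdot> P = f" "st s2 \<cdot> P = g" using Pp assms a by auto
  have Ns: "arr N" "sr N = S" "tg N = tg f" "N \<cdot> s1 = one (tg f)" "N \<cdot> s2 = one (tg f)" using Np assms a by auto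
  have e1: "st P = copairing S s1 s2 (st f) (st g)"
  proof (rule copair_uniq[OF BY, symmetric])
    show "arr (st P)" "sr (st P) = S" using Ps by auto
    show "st P \<cdot> s1 = st f" using Ps a by (metis st_comp st_st st_arr)
    show "st P \<cdot> s2 = st g" using Ps a by (metis st_comp st_st st_arr)
  qed
  have e2: "st N = pairing S (st s1) (st s2) (one (tg f)) (one (tg f))"
  proof (rule pair_uniq[OF BY, symmetric])
    show "arr (st N)" "tg (st N) = S" using Ns by auto
    show "st s1 \<cdot> st N = one (tg f)" using Ns a by (metis st_comp st_id arr_obj(2) assms(1))
    show "st s2 \<cdot> st N = one (tg f)" using Ns a by (metis st_comp st_id arr_obj(2) assms(1))
  qed
  have "st (f \<oplus> g) = st (N \<cdot> P)"
    using add_eq1[OF _ _ _ _ _ _ BY, of f g] assms unfolding plus1_def N_def P_def by simp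
  also have "\<dots> = st P \<cdot> st N" using Ps Ns by simp
  also have "\<dots> = plus2 S s1 (st s1) s2 (st s2) (st f) (st g)"
    unfolding plus2_def e1 e2 using assms by simp
  also have "\<dots> = st f \<oplus> st g"
    using add_eq2[OF _ _ _ _ _ _ BY, of "st f" "st g"] assms by simp
  finally show ?thesis .
qed

lemma bp_id:
  assumes B: "biproduct C A B S s1 r1 s2 r2"
  shows "one S = s1 \<cdot> r1 \<oplus> s2 \<cdot> r2"
proof -
  note a = bp_arr[OF B] bp_eq[OF B]
  show ?thesis
  proof (rule ext_in[OF B])
    show "r1 \<cdot> one S = r1 \<cdot> (s1 \<cdot> r1 \<oplus> s2 \<cdot> r2)"
      using a by (simp add: comp_add_l assoc[symmetric])
    show "r2 \<cdot> one S = r2 \<cdot> (s1 \<cdot> r1 \<oplus> s2 \<cdot> r2)"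
      using a by (simp add: comp_add_l assoc[symmetric])
  qed (use a in auto)
qed

end

context PH begin

lemma kernelD:
  assumes "kernel C f k"
  shows "arr f" "arr k" "tg k = sr f" "f \<cdot> k = zr (sr k) (tg f)"
    "\<And>g. arr g \<Longrightarrow> tg g = sr f \<Longrightarrow> f \<cdot> g = zr (sr g) (tg f) \<Longrightarrow> \<exists>h. arr h \<and> sr h = sr g \<and> tg h = sr k \<and> k \<cdot> h = g"
  using assms unfolding kernel_def hom_def by blast+

lemma R3: "arr f \<Longrightarrow> \<exists>k. kernel C f k \<and> isometry C k"
  using ph unfolding pre_hilbert_def by blast

lemma isoD: "isometry C k \<Longrightarrow> arr k" "isometry C k \<Longrightarrow> st k \<cdot> k = one (sr k)"
  unfolding isometry_def by auto

lemma iso_cancel: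
  assumes "isometry C k" "arr g" "arr h" "tg g = sr k" "tg h = sr k" "k \<cdot> g = k \<cdot> h"
  shows "g = h"
proof -
  note i = isoD[OF assms(1)]
  have "g = (st k \<cdot> k) \<cdot> g" using assms i by simp
  also have "\<dots> = st k \<cdot> (k \<cdot> g)" using assms(1-5) i(1) by (simp add: assoc)
  also have "\<dots> = st k \<cdot> (k \<cdot> h)" using assms by simp
  also have "\<dots> = (st k \<cdot> k) \<cdot> h" using assms(1-5) i(1) by (simp add: assoc)
  also have "\<dots> = h" using assms i by simp
  finally show ?thesis .
qed

lemma iso_mono: "isometry C k \<Longrightarrow> mono C k"
  unfolding mono_def using iso_cancel isoD by blast

lemma add_swap_mid:
  assumes "arr a" "arr b" "arr c" "arr d" "sr b = sr a" "sr c = sr a" "sr d = sr a"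
    "tg b = tg a" "tg c = tg a" "tg d = tg a"
  shows "(a \<oplus> b) \<oplus> (c \<oplus> d) = (a \<oplus> c) \<oplus> (b \<oplus> d)"
proof -
  have "(a \<oplus> b) \<oplus> (c \<oplus> d) = a \<oplus> (b \<oplus> (c \<oplus> d))" using assms by (simp add: add_assoc)
  also have "b \<oplus> (c \<oplus> d) = (b \<oplus> c) \<oplus> d" using assms by (simp add: add_assoc)
  also have "b \<oplus> c = c \<oplus> b" using assms by (simp add: add_comm)
  also have "(c \<oplus> b) \<oplus> d = c \<oplus> (b \<oplus> d)" using assms by (simp add: add_assoc)
  also have "a \<oplus> (c \<oplus> (b \<oplus> d)) = (a \<oplus> c) \<oplus> (b \<oplus> d)" using assms by (simp add: add_assoc)
  finally show ?thesis .
qed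

lemma negation:
  assumes X: "ob X"
  shows "\<exists>c. arr c \<and> sr c = X \<and> tg c = X \<and> one X \<oplus> c = zr X X"
proof -
  obtain S s1 s2 where B: "biproduct C X X S s1 (st s1) s2 (st s2)" using ob_bp[OF X] by blast
  note a = bp_arr[OF B] bp_eq[OF B]
  define D where "D = pairing S (st s1) (st s2) (one X) (one X)"
  define N where "N = copairing S s1 s2 (one X) (one X)"
  have Ds: "arr D" "sr D = X" "tg D = S" "st s1 \<cdot> D = one X" "st s2 \<cdot> D = one X"
    using pair[OF B, of "one X" "one X", folded D_def] X by auto
  have Ns: "arr N" "sr N = S" "tg N = X" "N \<cdot> s1 = one X" "N \<cdot> s2 = one X"
    using copair[OF B, of "one X" "one X", folded N_def] X by auto
  have stD: "st D = N"
  proof (rule copair_uniq[OF B, of "st D" "one X" "one X", folded N_def, symmetric])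
    show "arr (st D)" "sr (st D) = S" using Ds by auto
    show "st D \<cdot> s1 = one X" using Ds a X by (metis st_comp st_st st_id)
    show "st D \<cdot> s2 = one X" using Ds a X by (metis st_comp st_st st_id)
  qed
  have "\<forall>X\<in>Obj C. \<forall>S s1 s2 d. orthonormal_biproduct C X X S s1 s2 \<and>
          d \<in> hom C X S \<and> comp C (star C s1) d = idm C X \<and> comp C (star C s2) d = idm C X
          \<longrightarrow> (\<exists>f. kernel C f d)" using ph unfolding pre_hilbert_def by (elim conjE)
  then obtain f where kf: "kernel C f D" using X B Ds unfolding orthonormal_biproduct_def hom_def by blast
  note fk = kernelD[OF kf]
  obtain k where kk: "kernel C N k" and isok: "isometry C k" using R3[of N] Ns by blast
  note kN = kernelD[OF kk]
  define K where "K = sr k"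
  have ks: "arr k" "sr k = K" "tg k = S" using kN Ns K_def by auto
  have K: "ob K" using ks by auto
  define k1 where "k1 = st s1 \<cdot> k"
  define k2 where "k2 = st s2 \<cdot> k"
  have k12: "arr k1" "sr k1 = K" "tg k1 = X" "arr k2" "sr k2 = K" "tg k2 = X"
    using ks a unfolding k1_def k2_def by auto
  have stk12: "st k \<cdot> s1 = st k1" "st k \<cdot> s2 = st k2"
    unfolding k1_def k2_def using ks a by simp_all
  have kdec: "k = s1 \<cdot> k1 \<oplus> s2 \<cdot> k2"
  proof -
    have "k = one S \<cdot> k" using ks by simp
    also have "\<dots> = (s1 \<cdot> st s1 \<oplus> s2 \<cdot> st s2) \<cdot> k" using bp_id[OF B] by simp
    also have "\<dots> = s1 \<cdot> k1 \<oplus> s2 \<cdot> k2"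
      using ks a unfolding k1_def k2_def by (simp add: comp_add_r assoc)
    finally show ?thesis .
  qed
  have k1k2: "k1 \<oplus> k2 = zr K X"
  proof -
    have "zr K X = N \<cdot> k" using kN ks Ns by simp
    also have "\<dots> = N \<cdot> (s1 \<cdot> k1) \<oplus> N \<cdot> (s2 \<cdot> k2)"
      by (subst kdec) (use a k12 Ns in \<open>simp add: comp_add_l\<close>)
    also have "\<dots> = k1 \<oplus> k2" using a k12 Ns by (simp add: assoc[symmetric])
    finally show ?thesis by simp
  qed
  have sk1k2: "st k1 \<oplus> st k2 = zr X K"
    using st_add[of k1 k2] k12 k1k2 K X by simp
  obtain h where hs: "arr h" "sr h = tg f" "tg h = K" "k \<cdot> h = st f"
  proof -
    have "N \<cdot> st f = st D \<cdot> st f" using stD by simp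
    also have "\<dots> = st (f \<cdot> D)" by (rule st_comp[symmetric]) (use fk Ds in auto)
    also have "\<dots> = zr (tg f) X" using fk Ds X by simp
    finally have "N \<cdot> st f = zr (sr (st f)) (tg N)" using fk Ns by simp
    then show ?thesis using kN(5)[of "st f"] fk Ds Ns that K_def by auto
  qed
  have fst: "f = st h \<cdot> st k"
  proof -
    have "f = st (st f)" using fk by simp
    also have "\<dots> = st h \<cdot> st k" using hs ks by (metis st_comp)
    finally show ?thesis .
  qed
  have Pprop: "x = y" if xy: "arr x" "arr y" "tg x = X" "tg y = X" "sr y = sr x"
     and z: "st k1 \<cdot> x \<oplus> st k2 \<cdot> y = zr (sr x) K" for x y
  proof -
    define q where "q = pairing S (st s1) (st s2) x y"
    have qs: "arr q" "sr q = sr x" "tg q = S" "st s1 \<cdot> q = x" "st s2 \<cdot> q = y"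
      using pair[OF B, of x y, folded q_def] xy by auto
    have "st k \<cdot> q = st k \<cdot> ((s1 \<cdot> st s1 \<oplus> s2 \<cdot> st s2) \<cdot> q)"
      using bp_id[OF B] qs by (metis id_l)
    also have "\<dots> = (st k \<cdot> s1) \<cdot> (st s1 \<cdot> q) \<oplus> (st k \<cdot> s2) \<cdot> (st s2 \<cdot> q)"
      using qs a ks xy by (simp add: comp_add_r comp_add_l assoc)
    also have "\<dots> = zr (sr x) K" using z stk12 qs by simp
    finally have skq: "st k \<cdot> q = zr (sr x) K" .
    have "f \<cdot> q = st h \<cdot> (st k \<cdot> q)" using fst hs ks qs by (simp add: assoc)
    also have "\<dots> = zr (sr q) (tg f)" using skq hs qs xy by simp
    finally have "f \<cdot> q = zr (sr q) (tg f)" .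
    then obtain u where us: "arr u" "sr u = sr q" "tg u = X" "D \<cdot> u = q"
      using fk(5)[of q] qs fk Ds by auto
    have "x = st s1 \<cdot> (D \<cdot> u)" using us qs by simp
    also have "\<dots> = (st s1 \<cdot> D) \<cdot> u" using us Ds(1-3) a by (simp add: assoc)
    finally have xu: "x = u" using Ds us by simp
    have "y = st s2 \<cdot> (D \<cdot> u)" using us qs by simp
    also have "\<dots> = (st s2 \<cdot> D) \<cdot> u" using us Ds(1-3) a by (simp add: assoc)
    finally have yu: "y = u" using Ds us by simp
    show ?thesis using xu yu by simp
  qed
  have k1mono: "x = y" if xy: "arr x" "arr y" "tg x = X" "tg y = X" "sr y = sr x"
     and e: "st k1 \<cdot> x = st k1 \<cdot> y" for x y
  proof (rule Pprop[OF xy])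
    have "st k1 \<cdot> x \<oplus> st k2 \<cdot> y = st k1 \<cdot> y \<oplus> st k2 \<cdot> y" using e by simp
    also have "\<dots> = (st k1 \<oplus> st k2) \<cdot> y" using k12 xy by (simp add: comp_add_r)
    also have "\<dots> = zr (sr x) K" using sk1k2 xy K by simp
    finally show "st k1 \<cdot> x \<oplus> st k2 \<cdot> y = zr (sr x) K" .
  qed
  have k1epi: "u = v" if uv: "arr u" "arr v" "sr u = X" "sr v = X" "tg v = tg u" and e: "u \<cdot> k1 = v \<cdot> k1" for u v
  proof -
    have "st k1 \<cdot> st u = st k1 \<cdot> st v" using e uv k12 by (metis st_comp)
    then have "st u = st v" using k1mono[of "st u" "st v"] uv by simp
    then show ?thesis using uv by (metis st_st)
  qed
  have one_K: "one K = st k1 \<cdot> k1 \<oplus> st k2 \<cdot> k2"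
  proof -
    have "one K = st k \<cdot> k" using isoD[OF isok] ks by simp
    also have "\<dots> = (st k \<cdot> s1) \<cdot> k1 \<oplus> (st k \<cdot> s2) \<cdot> k2"
      by (subst (2) kdec) (use a k12 ks in \<open>simp add: comp_add_l assoc\<close>)
    finally show ?thesis unfolding stk12 .
  qed
  define c where "c = k1 \<cdot> st k2 \<oplus> k1 \<cdot> st k2"
  have cs: "arr c" "sr c = X" "tg c = X" unfolding c_def using k12 by auto
  define aa where "aa = st k1 \<cdot> k1"
  define bb where "bb = st k2 \<cdot> k2"
  define ee where "ee = st k2 \<cdot> k1"
  have abe: "arr aa" "sr aa = K" "tg aa = K" "arr bb" "sr bb = K" "tg bb = K" "arr ee" "sr ee = K" "tg ee = K"
    unfolding aa_def bb_def ee_def using k12 by auto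
  have ae: "aa \<oplus> ee = zr K K"
  proof -
    have "aa \<oplus> ee = (st k1 \<oplus> st k2) \<cdot> k1" unfolding aa_def ee_def using k12 by (simp add: comp_add_r)
    then show ?thesis using sk1k2 k12 K by simp
  qed
  have be: "bb \<oplus> ee = zr K K"
  proof -
    have "bb \<oplus> ee = st k2 \<cdot> (k2 \<oplus> k1)" unfolding bb_def ee_def using k12 by (simp add: comp_add_l)
    also have "k2 \<oplus> k1 = zr K X" using k1k2 add_comm[of k1 k2] k12 by simp
    finally show ?thesis using k12 K by simp
  qed
  have "(one X \<oplus> c) \<cdot> k1 = k1 \<oplus> (k1 \<cdot> ee \<oplus> k1 \<cdot> ee)"
    unfolding c_def ee_def using k12 X by (simp add: comp_add_r assoc)
  also have "k1 \<oplus> (k1 \<cdot> ee \<oplus> k1 \<cdot> ee) = (k1 \<cdot> aa \<oplus> k1 \<cdot> bb) \<oplus> (k1 \<cdot> ee \<oplus> k1 \<cdot> ee)"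
  proof (rule arg_cong[where f="\<lambda>z. z \<oplus> (k1 \<cdot> ee \<oplus> k1 \<cdot> ee)"])
    show "k1 = k1 \<cdot> aa \<oplus> k1 \<cdot> bb"
      using one_K k12 abe unfolding aa_def[symmetric] bb_def[symmetric] by (metis comp_add_l id_r)
  qed
  also have "(k1 \<cdot> aa \<oplus> k1 \<cdot> bb) \<oplus> (k1 \<cdot> ee \<oplus> k1 \<cdot> ee) = k1 \<cdot> ((aa \<oplus> bb) \<oplus> (ee \<oplus> ee))"
    using k12 abe by (simp add: comp_add_l)
  also have "(aa \<oplus> bb) \<oplus> (ee \<oplus> ee) = (aa \<oplus> ee) \<oplus> (bb \<oplus> ee)"
    using abe by (simp add: add_swap_mid)
  also have "\<dots> = zr K K" using ae be K by simp
  finally have "(one X \<oplus> c) \<cdot> k1 = zr X X \<cdot> k1" using k12 K X by simp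
  then have "one X \<oplus> c = zr X X" using k1epi[of "one X \<oplus> c" "zr X X"] cs X by simp
  then show ?thesis using cs by blast
qed

end

context PH begin

abbreviation sb (infixl "\<ominus>" 65) where "f \<ominus> g \<equiv> sub_mor C f g"

definition ng where "ng X = (SOME c. arr c \<and> sr c = X \<and> tg c = X \<and> one X \<oplus> c = zr X X)"

lemma ng: assumes "ob X" shows "arr (ng X)" "sr (ng X) = X" "tg (ng X) = X" "one X \<oplus> ng X = zr X X"
  using someI_ex[OF negation[OF assms]] unfolding ng_def[symmetric] by auto

definition neg where "neg f = ng (tg f) \<cdot> f"

lemma neg_arr[simp]: "arr f \<Longrightarrow> arr (neg f)" "arr f \<Longrightarrow> sr (neg f) = sr f" "arr f \<Longrightarrow> tg (neg f) = tg f"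
  unfolding neg_def using ng by auto

lemma add_neg: assumes "arr f" shows "f \<oplus> neg f = zr (sr f) (tg f)" "neg f \<oplus> f = zr (sr f) (tg f)"
proof -
  note n = ng[of "tg f"]
  have "(one (tg f) \<oplus> ng (tg f)) \<cdot> f = one (tg f) \<cdot> f \<oplus> ng (tg f) \<cdot> f"
    by (rule comp_add_r) (use assms n in auto)
  then have "f \<oplus> neg f = (one (tg f) \<oplus> ng (tg f)) \<cdot> f"
    unfolding neg_def using assms by simp
  also have "\<dots> = zr (sr f) (tg f)" using n assms by simp
  finally show "f \<oplus> neg f = zr (sr f) (tg f)" .
  then show "neg f \<oplus> f = zr (sr f) (tg f)" using add_comm[of "neg f" f] assms by simp
qed

context
  fixes f g
  assumes fg: "arr f" "arr g" "sr g = sr f" "tg g = tg f"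
begin

lemma add_cancel: assumes h: "arr h" "sr h = sr f" "tg h = tg f" and e: "f \<oplus> h = g \<oplus> h" shows "f = g"
proof -
  have "f = f \<oplus> (h \<oplus> neg h)" using add_neg[OF h(1)] h fg by simp
  also have "\<dots> = (f \<oplus> h) \<oplus> neg h" using h fg by (simp add: add_assoc)
  also have "\<dots> = (g \<oplus> h) \<oplus> neg h" using e by simp
  also have "\<dots> = g \<oplus> (h \<oplus> neg h)" using h fg by (simp add: add_assoc)
  also have "\<dots> = g" using add_neg[OF h(1)] h fg by simp
  finally show ?thesis .
qed

lemma sub_eq: "f \<ominus> g = f \<oplus> neg g"
  unfolding sub_mor_def
proof (rule the_equality)
  show "f \<oplus> neg g \<in> hom C (sr f) (tg f) \<and> f \<oplus> neg g \<oplus> g = f"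
    using fg add_neg[of g] by (simp add: hom_def add_assoc)
  fix h assume h: "h \<in> hom C (sr f) (tg f) \<and> h \<oplus> g = f"
  have hs: "arr h" "sr h = sr f" "tg h = tg f" using h by (auto simp: hom_def)
  have "h = h \<oplus> (g \<oplus> neg g)" using hs fg add_neg[of g] by simp
  also have "\<dots> = (h \<oplus> g) \<oplus> neg g" using hs fg by (simp add: add_assoc)
  finally show "h = f \<oplus> neg g" using h by simp
qed

lemma sub_arr: "arr (f \<ominus> g)" "sr (f \<ominus> g) = sr f" "tg (f \<ominus> g) = tg f"
  using sub_eq fg by auto

lemma sub_add: "(f \<ominus> g) \<oplus> g = f"
  using sub_eq fg add_neg[of g] by (simp add: add_assoc)

lemma sub_unique: assumes "arr h" "sr h = sr f" "tg h = tg f" "h \<oplus> g = f" shows "f \<ominus> g = h"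
proof -
  have "f \<ominus> g = (h \<oplus> g) \<oplus> neg g" using sub_eq assms by simp
  also have "\<dots> = h \<oplus> (g \<oplus> neg g)" using assms(1-3) fg by (simp add: add_assoc)
  also have "\<dots> = h" using assms fg add_neg[of g] by simp
  finally show ?thesis .
qed

lemma sub_eq0: assumes "f \<ominus> g = zr (sr f) (tg f)" shows "f = g"
  using sub_add assms fg by simp

end

lemma sub_arr_simp[simp]:
  "arr f \<Longrightarrow> arr g \<Longrightarrow> sr g = sr f \<Longrightarrow> tg g = tg f \<Longrightarrow> arr (f \<ominus> g)"
  "arr f \<Longrightarrow> arr g \<Longrightarrow> sr g = sr f \<Longrightarrow> tg g = tg f \<Longrightarrow> sr (f \<ominus> g) = sr f"
  "arr f \<Longrightarrow> arr g \<Longrightarrow> sr g = sr f \<Longrightarrow> tg g = tg f \<Longrightarrow> tg (f \<ominus> g) = tg f"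
  using sub_arr by auto

lemma sub_self[simp]: "arr f \<Longrightarrow> f \<ominus> f = zr (sr f) (tg f)"
  using sub_unique[of f f "zr (sr f) (tg f)"] by simp

lemma sub_zero[simp]: "arr f \<Longrightarrow> sr f = X \<Longrightarrow> tg f = Y \<Longrightarrow> f \<ominus> zr X Y = f"
  using sub_unique[of f "zr X Y" f] by auto

lemma comp_sub_l:
  assumes "arr f" "arr g" "sr g = sr f" "tg g = tg f" "arr h" "sr h = tg f"
  shows "h \<cdot> (f \<ominus> g) = h \<cdot> f \<ominus> h \<cdot> g"
proof (rule sub_unique[symmetric])
  show "h \<cdot> (f \<ominus> g) \<oplus> h \<cdot> g = h \<cdot> f"
    using assms comp_add_l[of "f \<ominus> g" g h] sub_add[of f g] by simp
qed (use assms in auto)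

lemma comp_sub_r:
  assumes "arr f" "arr g" "sr g = sr f" "tg g = tg f" "arr k" "tg k = sr f"
  shows "(f \<ominus> g) \<cdot> k = f \<cdot> k \<ominus> g \<cdot> k"
proof (rule sub_unique[symmetric])
  show "(f \<ominus> g) \<cdot> k \<oplus> g \<cdot> k = f \<cdot> k"
    using assms comp_add_r[of "f \<ominus> g" g k] sub_add[of f g] by simp
qed (use assms in auto)

lemma st_sub:
  assumes "arr f" "arr g" "sr g = sr f" "tg g = tg f"
  shows "st (f \<ominus> g) = st f \<ominus> st g"
proof (rule sub_unique[symmetric])
  show "st (f \<ominus> g) \<oplus> st g = st f"
    using assms st_add[of "f \<ominus> g" g] sub_add[of f g] by simp
qed (use assms in auto)

lemma add_sub_cancel: "arr f \<Longrightarrow> arr g \<Longrightarrow> sr g = sr f \<Longrightarrow> tg g = tg f \<Longrightarrow> (f \<oplus> g) \<ominus> g = f"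
  by (rule sub_unique) auto

subsection \<open>Finite sums\<close>

abbreviation sm where "sm X Y fs \<equiv> sum_mor C X Y fs"

definition typed where "typed X Y fs \<longleftrightarrow> (\<forall>f\<in>set fs. arr f \<and> sr f = X \<and> tg f = Y)"

lemma typed_simps[simp]: "typed X Y []" "typed X Y (f # fs) \<longleftrightarrow> arr f \<and> sr f = X \<and> tg f = Y \<and> typed X Y fs"
  "typed X Y (fs @ gs) \<longleftrightarrow> typed X Y fs \<and> typed X Y gs"
  unfolding typed_def by auto

lemma sum_simps[simp]: "sm X Y [] = zr X Y" "sm X Y (f # fs) = f \<oplus> sm X Y fs"
  unfolding sum_mor_def by auto

lemma sum_arr:
  assumes "ob X" "ob Y" "typed X Y fs"
  shows "arr (sm X Y fs)" "sr (sm X Y fs) = X" "tg (sm X Y fs) = Y"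
  using assms by (induction fs) auto

lemma sum_arr_simp[simp]:
  "ob X \<Longrightarrow> ob Y \<Longrightarrow> typed X Y fs \<Longrightarrow> arr (sm X Y fs)"
  "ob X \<Longrightarrow> ob Y \<Longrightarrow> typed X Y fs \<Longrightarrow> sr (sm X Y fs) = X"
  "ob X \<Longrightarrow> ob Y \<Longrightarrow> typed X Y fs \<Longrightarrow> tg (sm X Y fs) = Y"
  using sum_arr by auto

lemma comp_sum_l:
  assumes "ob X" "arr h" "sr h = Y" "typed X Y fs"
  shows "h \<cdot> sm X Y fs = sm X (tg h) (map (\<lambda>f. h \<cdot> f) fs)"
  using assms by (induction fs) (auto simp: comp_add_l)

lemma comp_sum_r:
  assumes "ob Y" "arr k" "tg k = X" "typed X Y fs"
  shows "sm X Y fs \<cdot> k = sm (sr k) Y (map (\<lambda>f. f \<cdot> k) fs)"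
  using assms by (induction fs) (auto simp: comp_add_r)

lemma typed_map: "typed X Y (map F xs) \<longleftrightarrow> (\<forall>x\<in>set xs. arr (F x) \<and> sr (F x) = X \<and> tg (F x) = Y)"
  unfolding typed_def by auto

lemma sum_zeros:
  assumes "ob X" "ob Y" "\<And>f. f \<in> set fs \<Longrightarrow> f = zr X Y"
  shows "sm X Y fs = zr X Y"
  using assms(3)
proof (induction fs)
  case Nil then show ?case by simp
next
  case (Cons a fs)
  have a: "a = zr X Y" using Cons.prems by simp
  have "sm X Y fs = zr X Y" using Cons.prems by (intro Cons.IH) simp
  then show ?case using a assms(1,2) by simp
qed

lemma sum_single:
  assumes "ob X" "ob Y" "i < k" "\<And>j. j < k \<Longrightarrow> arr (F j) \<and> sr (F j) = X \<and> tg (F j) = Y"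
    "\<And>j. j < k \<Longrightarrow> j \<noteq> i \<Longrightarrow> F j = zr X Y"
  shows "sm X Y (map F [0..<k]) = F i"
  using assms
proof (induction k)
  case 0 then show ?case by simp
next
  case (Suc k)
  have "sm X Y (map F [0..<Suc k]) = sm X Y (map F [0..<k] @ [F k])" by simp
  also have "\<dots> = sm X Y (map F [0..<k]) \<oplus> F k"
  proof -
    have gen: "sm X Y (fs @ [g]) = sm X Y fs \<oplus> g" if "typed X Y fs" "arr g" "sr g = X" "tg g = Y" for fs g
      using that Suc.prems(1,2)
    proof (induction fs)
      case Nil then show ?case using add_comm[of g "zr X Y"] by simp
    next
      case (Cons a fs) then show ?case by (simp add: add_assoc)
    qed
    show ?thesis by (rule gen) (use Suc.prems in \<open>auto simp: typed_map\<close>)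
  qed
  also have "\<dots> = F i"
  proof (cases "i = k")
    case True
    then have "sm X Y (map F [0..<k]) = zr X Y" using Suc.prems by (intro sum_zeros) auto
    then show ?thesis using True Suc.prems by simp
  next
    case False
    then have "sm X Y (map F [0..<k]) = F i" using Suc.prems by (intro Suc.IH) auto
    then show ?thesis using False Suc.prems by simp
  qed
  finally show ?case .
qed

lemma sum_closed:
  assumes "ob X" "ob Y" "typed X Y fs" "P (zr X Y)" "\<And>f. f \<in> set fs \<Longrightarrow> P f"
    "\<And>f g. arr f \<Longrightarrow> arr g \<Longrightarrow> sr f = X \<Longrightarrow> sr g = X \<Longrightarrow> tg f = Y \<Longrightarrow> tg g = Y \<Longrightarrow> P f \<Longrightarrow> P g \<Longrightarrow> P (f \<oplus> g)"
  shows "P (sm X Y fs)"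
  using assms by (induction fs) auto

end

context PH begin

lemma inv_prop:
  assumes "invertible C g"
  shows "arr (inv_mor C g)" "sr (inv_mor C g) = tg g" "tg (inv_mor C g) = sr g"
    "inv_mor C g \<cdot> g = one (sr g)" "g \<cdot> inv_mor C g = one (tg g)"
proof -
  obtain h where h: "h \<in> hom C (tg g) (sr g)" "h \<cdot> g = one (sr g)" "g \<cdot> h = one (tg g)" and g: "arr g"
    using assms unfolding invertible_def by blast
  have hs: "arr h" "sr h = tg g" "tg h = sr g" using h by (auto simp: hom_def)
  have u: "h' = h" if h': "h' \<in> hom C (tg g) (sr g) \<and> h' \<cdot> g = one (sr g) \<and> g \<cdot> h' = one (tg g)" for h'
  proof -
    have h's: "arr h'" "sr h' = tg g" "tg h' = sr g" using h' by (auto simp: hom_def)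
    have "h' = h' \<cdot> (g \<cdot> h)" using h hs h's by simp
    also have "\<dots> = (h' \<cdot> g) \<cdot> h" using hs h's g by (simp add: assoc)
    also have "\<dots> = h" using h' hs by simp
    finally show ?thesis .
  qed
  have "inv_mor C g \<in> hom C (tg g) (sr g) \<and> inv_mor C g \<cdot> g = one (sr g) \<and> g \<cdot> inv_mor C g = one (tg g)"
    unfolding inv_mor_def
  proof (rule theI[of _ h])
    show "h \<in> hom C (tg g) (sr g) \<and> h \<cdot> g = one (sr g) \<and> g \<cdot> h = one (tg g)" using h by blast
  qed (rule u)
  then show "arr (inv_mor C g)" "sr (inv_mor C g) = tg g" "tg (inv_mor C g) = sr g"
    "inv_mor C g \<cdot> g = one (sr g)" "g \<cdot> inv_mor C g = one (tg g)" by (auto simp: hom_def)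
qed

lemma split_closed:
  assumes f: "arr f" and r: "arr r" "sr r = tg f" "tg r = sr f" and rf: "r \<cdot> f = one (sr f)"
  shows "closed_mono C f"
proof -
  define X where "X = tg f"
  define A where "A = sr f"
  have XA: "ob X" "ob A" unfolding X_def A_def using f by auto
  define e where "e = f \<cdot> r"
  have es: "arr e" "sr e = X" "tg e = X" unfolding e_def X_def using f r by auto
  define E where "E = one X \<ominus> e"
  have Es: "arr E" "sr E = X" "tg E = X" unfolding E_def using es XA by auto
  obtain i where ki: "kernel C E i" and isoi: "isometry C i" using R3[OF Es(1)] by blast
  note kI = kernelD[OF ki]
  define I where "I = sr i"
  have is_: "arr i" "sr i = I" "tg i = X" using kI Es I_def by auto
  have Iob: "ob I" using is_ arr_obj(1)[of i] by simp
  have ef: "e \<cdot> f = f"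
  proof -
    have "e \<cdot> f = f \<cdot> (r \<cdot> f)" unfolding e_def using f r by (simp add: assoc)
    then show ?thesis using rf f by simp
  qed
  have "E \<cdot> f = one X \<cdot> f \<ominus> e \<cdot> f" unfolding E_def by (rule comp_sub_r) (use es XA f X_def in auto)
  also have "\<dots> = zr A X" using ef f X_def A_def by simp
  finally have Ef: "E \<cdot> f = zr (sr f) (tg E)" using Es A_def by simp
  obtain h where hs: "arr h" "sr h = A" "tg h = I" "i \<cdot> h = f"
    using kI(5)[of f] Ef f Es X_def A_def I_def by auto
  have "E \<cdot> i = one X \<cdot> i \<ominus> e \<cdot> i" unfolding E_def by (rule comp_sub_r) (use es XA is_ in auto)
  then have "i \<ominus> e \<cdot> i = zr I X" using kI is_ Es by simp
  then have ei: "i = e \<cdot> i" using sub_eq0[of i "e \<cdot> i"] is_ es by simp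
  define g where "g = r \<cdot> i"
  have gs: "arr g" "sr g = I" "tg g = A" unfolding g_def using r is_ X_def A_def by auto
  have gh: "g \<cdot> h = one A"
  proof -
    have "g \<cdot> h = r \<cdot> (i \<cdot> h)" unfolding g_def using r is_ hs X_def by (simp add: assoc)
    then show ?thesis using hs rf A_def by simp
  qed
  have hg: "h \<cdot> g = one I"
  proof (rule iso_cancel[OF isoi])
    have "i \<cdot> (h \<cdot> g) = (i \<cdot> h) \<cdot> g" using is_ hs(1-3) gs by (simp add: assoc)
    also have "\<dots> = f \<cdot> (r \<cdot> i)" unfolding g_def using hs f r is_ X_def by (simp add: assoc)
    also have "\<dots> = e \<cdot> i" unfolding e_def using f r is_ X_def by (simp add: assoc)
    also have "\<dots> = i \<cdot> one I" using ei is_ by simp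
    finally show "i \<cdot> (h \<cdot> g) = i \<cdot> one I" .
  qed (use hs gs is_ in auto)
  have ff: "st f \<cdot> f = st h \<cdot> h"
  proof -
    have "st f \<cdot> f = st (i \<cdot> h) \<cdot> (i \<cdot> h)" using hs by simp
    also have "\<dots> = (st h \<cdot> st i) \<cdot> (i \<cdot> h)" using hs(1-3) is_ by simp
    also have "\<dots> = st h \<cdot> ((st i \<cdot> i) \<cdot> h)" using hs(1-3) is_ by (simp add: assoc)
    also have "\<dots> = st h \<cdot> h" using isoD[OF isoi] hs is_ by simp
    finally show ?thesis .
  qed
  define w where "w = g \<cdot> st g"
  have ws: "arr w" "sr w = A" "tg w = A" unfolding w_def using gs by auto
  have w1: "w \<cdot> (st h \<cdot> h) = one A"
  proof -
    have "w \<cdot> (st h \<cdot> h) = g \<cdot> ((st g \<cdot> st h) \<cdot> h)" unfolding w_def using gs hs by (simp add: assoc)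
    also have "st g \<cdot> st h = st (h \<cdot> g)" using gs hs by simp
    also have "\<dots> = one I" using hg Iob by simp
    finally show ?thesis using gs hs gh by simp
  qed
  have w2: "(st h \<cdot> h) \<cdot> w = one A"
  proof -
    have "(st h \<cdot> h) \<cdot> w = st h \<cdot> ((h \<cdot> g) \<cdot> st g)" unfolding w_def using gs hs by (simp add: assoc)
    also have "\<dots> = st h \<cdot> st g" using hg gs hs by simp
    also have "\<dots> = st (g \<cdot> h)" using gs hs by simp
    also have "\<dots> = one A" using gh XA by simp
    finally show ?thesis .
  qed
  have "invertible C (st f \<cdot> f)"
    unfolding invertible_def ff using ws w1 w2 hs by (auto simp: hom_def intro!: bexI[of _ w])
  then show ?thesis unfolding closed_mono_def using f by simp
qed

lemma proj_facts:
  assumes cm: "closed_mono C t"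
  shows "arr (proj_mor C t)" "sr (proj_mor C t) = tg t" "tg (proj_mor C t) = tg t"
    "proj_mor C t \<cdot> t = t" "st t \<cdot> proj_mor C t = st t"
    "arr (inv_mor C (st t \<cdot> t) \<cdot> st t)" "sr (inv_mor C (st t \<cdot> t) \<cdot> st t) = tg t"
    "tg (inv_mor C (st t \<cdot> t) \<cdot> st t) = sr t"
    "proj_mor C t = t \<cdot> (inv_mor C (st t \<cdot> t) \<cdot> st t)"
proof -
  have t: "arr t" and iv: "invertible C (st t \<cdot> t)" using cm unfolding closed_mono_def by auto
  define v where "v = inv_mor C (st t \<cdot> t)"
  have vs: "arr v" "sr v = sr t" "tg v = sr t" "v \<cdot> (st t \<cdot> t) = one (sr t)" "(st t \<cdot> t) \<cdot> v = one (sr t)"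
    using inv_prop[OF iv] t unfolding v_def[symmetric] by auto
  show "proj_mor C t = t \<cdot> (inv_mor C (st t \<cdot> t) \<cdot> st t)" unfolding proj_mor_def ..
  show "arr (inv_mor C (st t \<cdot> t) \<cdot> st t)" "sr (inv_mor C (st t \<cdot> t) \<cdot> st t) = tg t"
    "tg (inv_mor C (st t \<cdot> t) \<cdot> st t) = sr t" unfolding v_def[symmetric] using vs t by auto
  then show "arr (proj_mor C t)" "sr (proj_mor C t) = tg t" "tg (proj_mor C t) = tg t"
    unfolding proj_mor_def using t by auto
  have "proj_mor C t \<cdot> t = t \<cdot> (v \<cdot> (st t \<cdot> t))" unfolding proj_mor_def v_def[symmetric]
    using vs t by (simp add: assoc)
  then show "proj_mor C t \<cdot> t = t" using vs t by simp
  have "st t \<cdot> proj_mor C t = st t \<cdot> (t \<cdot> (v \<cdot> st t))" unfolding proj_mor_def v_def[symmetric] ..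
  also have "\<dots> = (st t \<cdot> t) \<cdot> (v \<cdot> st t)" using vs(1-3) t by (simp add: assoc)
  also have "\<dots> = ((st t \<cdot> t) \<cdot> v) \<cdot> st t" using vs(1-3) t by (simp add: assoc)
  also have "\<dots> = st t" using vs t by simp
  finally show "st t \<cdot> proj_mor C t = st t" .
qed

end


lemma gs_list_eq: "gs_list C s m = map (gram_schmidt C s) [0..<Suc m]"
proof (induction m)
  case 0 then show ?case by (simp add: gram_schmidt_def)
next
  case (Suc m)
  obtain N where e: "gs_list C s (Suc m) = gs_list C s m @ [N]" by (simp add: Let_def)
  then have "gram_schmidt C s (Suc m) = N" by (simp add: gram_schmidt_def)
  then show ?case using e Suc.IH by simp
qed

lemma gs_0: "gram_schmidt C s 0 = s 0" by (simp add: gram_schmidt_def)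

lemma gs_Suc: "gram_schmidt C s (Suc m) = sub_mor C (s (Suc m)) (sum_mor C (src C (s (Suc m))) (tgt C (s (Suc m)))
     (map (\<lambda>j. comp C (proj_mor C (gram_schmidt C s j)) (s (Suc m))) [0..<Suc m]))"
proof -
  have "gram_schmidt C s (Suc m) = last (gs_list C s (Suc m))" by (simp only: gram_schmidt_def)
  also have "\<dots> = sub_mor C (s (Suc m)) (sum_mor C (src C (s (Suc m))) (tgt C (s (Suc m)))
     (map (\<lambda>t. comp C (proj_mor C t) (s (Suc m))) (gs_list C s m)))"
    unfolding gs_list.simps(2) Let_def by simp
  also have "\<dots> = sub_mor C (s (Suc m)) (sum_mor C (src C (s (Suc m))) (tgt C (s (Suc m)))
     (map (\<lambda>j. comp C (proj_mor C (gram_schmidt C s j)) (s (Suc m))) [0..<Suc m]))"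
    unfolding gs_list_eq map_map o_def ..
  finally show ?thesis .
qed

context PH begin

definition fac where "fac v g \<longleftrightarrow> (\<exists>h. arr h \<and> sr h = sr g \<and> tg h = sr v \<and> v \<cdot> h = g)"

lemma facI: "arr h \<Longrightarrow> sr h = sr g \<Longrightarrow> tg h = sr v \<Longrightarrow> v \<cdot> h = g \<Longrightarrow> fac v g"
  unfolding fac_def by blast

lemma facE: "fac v g \<Longrightarrow> (\<And>h. arr h \<Longrightarrow> sr h = sr g \<Longrightarrow> tg h = sr v \<Longrightarrow> v \<cdot> h = g \<Longrightarrow> P) \<Longrightarrow> P"
  unfolding fac_def by blast

lemma fac_add:
  assumes a: "arr v" "arr g1" "arr g2" "sr g2 = sr g1" "tg g1 = tg v" "tg g2 = tg v"
    and f1: "fac v g1" and f2: "fac v g2"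
  shows "fac v (g1 \<oplus> g2)"
proof -
  obtain h1 where h1: "arr h1" "sr h1 = sr g1" "tg h1 = sr v" "v \<cdot> h1 = g1" using f1 by (rule facE)
  obtain h2 where h2: "arr h2" "sr h2 = sr g2" "tg h2 = sr v" "v \<cdot> h2 = g2" using f2 by (rule facE)
  have "v \<cdot> (h1 \<oplus> h2) = v \<cdot> h1 \<oplus> v \<cdot> h2" by (rule comp_add_l) (use a h1(1-3) h2(1-3) in auto)
  then have e: "v \<cdot> (h1 \<oplus> h2) = g1 \<oplus> g2" using h1(4) h2(4) by simp
  show ?thesis by (rule facI[OF _ _ _ e]) (use a h1(1-3) h2(1-3) in auto)
qed

lemma fac_sub:
  assumes a: "arr v" "arr g1" "arr g2" "sr g2 = sr g1" "tg g1 = tg v" "tg g2 = tg v"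
    and f1: "fac v g1" and f2: "fac v g2"
  shows "fac v (g1 \<ominus> g2)"
proof -
  obtain h1 where h1: "arr h1" "sr h1 = sr g1" "tg h1 = sr v" "v \<cdot> h1 = g1" using f1 by (rule facE)
  obtain h2 where h2: "arr h2" "sr h2 = sr g2" "tg h2 = sr v" "v \<cdot> h2 = g2" using f2 by (rule facE)
  have "v \<cdot> (h1 \<ominus> h2) = v \<cdot> h1 \<ominus> v \<cdot> h2" by (rule comp_sub_l) (use a h1(1-3) h2(1-3) in auto)
  then have e: "v \<cdot> (h1 \<ominus> h2) = g1 \<ominus> g2" using h1(4) h2(4) by simp
  show ?thesis by (rule facI[OF _ _ _ e]) (use a h1(1-3) h2(1-3) in auto)
qed

lemma fac_comp:
  assumes a: "arr v" "arr g" "arr k" "tg k = sr g" "tg g = tg v" and f: "fac v g"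
  shows "fac v (g \<cdot> k)"
proof -
  obtain h where h: "arr h" "sr h = sr g" "tg h = sr v" "v \<cdot> h = g" using f by (rule facE)
  have "v \<cdot> (h \<cdot> k) = (v \<cdot> h) \<cdot> k" using a h(1-3) by (simp add: assoc)
  then have e: "v \<cdot> (h \<cdot> k) = g \<cdot> k" using h(4) by simp
  show ?thesis by (rule facI[OF _ _ _ e]) (use a h(1-3) in auto)
qed

lemma fac_zr: "arr v \<Longrightarrow> ob W \<Longrightarrow> fac v (zr W (tg v))"
  by (rule facI[of "zr W (sr v)"]) auto

lemma fac_sum: "arr v \<Longrightarrow> ob W \<Longrightarrow> typed W (tg v) fs \<Longrightarrow> (\<And>f. f \<in> set fs \<Longrightarrow> fac v f) \<Longrightarrow> fac v (sm W (tg v) fs)"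
  by (rule sum_closed[where P="fac v"]) (auto intro: fac_zr fac_add)

context
  fixes n :: nat and A :: "nat \<Rightarrow> 'o" and X :: 'o and s r :: "nat \<Rightarrow> 'm"
  assumes X: "ob X"
   and sA: "\<And>k. k < n \<Longrightarrow> arr (s k) \<and> sr (s k) = A k \<and> tg (s k) = X"
   and rA: "\<And>k. k < n \<Longrightarrow> arr (r k) \<and> sr (r k) = X \<and> tg (r k) = A k"
   and rs: "\<And>k j. k < n \<Longrightarrow> j < n \<Longrightarrow> r k \<cdot> s j = (if j = k then one (A k) else zr (A j) (A k))"
begin

abbreviation t where "t \<equiv> gram_schmidt C s"

definition Sg where "Sg k = sm (A k) X (map (\<lambda>j. proj_mor C (t j) \<cdot> s k) [0..<k])"

lemma t_step: assumes "0 < k" "k < n" shows "t k = s k \<ominus> Sg k"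
proof -
  obtain m where k: "k = Suc m" using assms by (cases k) auto
  show ?thesis unfolding k gs_Suc Sg_def using sA[of "Suc m"] assms k by simp
qed

definition G where "G k \<longleftrightarrow> arr (t k) \<and> sr (t k) = A k \<and> tg (t k) = X \<and> closed_mono C (t k) \<and>
   (\<forall>j. k < j \<and> j < n \<longrightarrow> r j \<cdot> t k = zr (A k) (A j)) \<and> r k \<cdot> t k = one (A k) \<and>
   (\<forall>i<k. st (t i) \<cdot> t k = zr (A k) (A i))"

lemma Sg_facts:
  assumes k: "k < n" and IH: "\<And>j. j < k \<Longrightarrow> G j"
  shows "typed (A k) X (map (\<lambda>j. proj_mor C (t j) \<cdot> s k) [0..<k])"
    "arr (Sg k)" "sr (Sg k) = A k" "tg (Sg k) = X"
    "\<And>h. arr h \<Longrightarrow> sr h = X \<Longrightarrow> (\<And>j. j < k \<Longrightarrow> h \<cdot> t j = zr (A j) (tg h)) \<Longrightarrow> h \<cdot> Sg k = zr (A k) (tg h)"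
proof -
  have sk: "arr (s k)" "sr (s k) = A k" "tg (s k) = X" using sA k by auto
  have Ak: "ob (A k)" using sk arr_obj(1)[of "s k"] by simp
  have pj: "arr (proj_mor C (t j))" "sr (proj_mor C (t j)) = X" "tg (proj_mor C (t j)) = X"
    "proj_mor C (t j) = t j \<cdot> (inv_mor C (st (t j) \<cdot> t j) \<cdot> st (t j))"
    "arr (inv_mor C (st (t j) \<cdot> t j) \<cdot> st (t j))" "sr (inv_mor C (st (t j) \<cdot> t j) \<cdot> st (t j)) = X"
    "tg (inv_mor C (st (t j) \<cdot> t j) \<cdot> st (t j)) = A j" "arr (t j)" "sr (t j) = A j" "tg (t j) = X"
    if "j < k" for j
    using proj_facts[of "t j"] IH[OF that] unfolding G_def by auto
  show ty: "typed (A k) X (map (\<lambda>j. proj_mor C (t j) \<cdot> s k) [0..<k])"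
    unfolding typed_map using pj sk by auto
  show "arr (Sg k)" "sr (Sg k) = A k" "tg (Sg k) = X" unfolding Sg_def using ty Ak X by auto
  fix h assume h: "arr h" "sr h = X" and ann: "\<And>j. j < k \<Longrightarrow> h \<cdot> t j = zr (A j) (tg h)"
  have "h \<cdot> Sg k = sm (A k) (tg h) (map (\<lambda>f. h \<cdot> f) (map (\<lambda>j. proj_mor C (t j) \<cdot> s k) [0..<k]))"
    unfolding Sg_def using comp_sum_l[OF Ak h ty] .
  also have "\<dots> = zr (A k) (tg h)"
  proof (rule sum_zeros)
    show "ob (A k)" "ob (tg h)" using Ak h by auto
    fix f assume "f \<in> set (map (\<lambda>f. h \<cdot> f) (map (\<lambda>j. proj_mor C (t j) \<cdot> s k) [0..<k]))"
    then obtain j where j: "j < k" and f: "f = h \<cdot> (proj_mor C (t j) \<cdot> s k)" by auto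
    define w where "w = inv_mor C (st (t j) \<cdot> t j) \<cdot> st (t j)"
    note p = pj[OF j, folded w_def]
    have "f = (h \<cdot> t j) \<cdot> (w \<cdot> s k)" unfolding f p(4) using p h sk by (simp add: assoc)
    also have "\<dots> = zr (A k) (tg h)" using ann[OF j] p h sk by simp
    finally show "f = zr (A k) (tg h)" .
  qed
  finally show "h \<cdot> Sg k = zr (A k) (tg h)" .
qed

lemma G_all: "k < n \<Longrightarrow> G k"
proof (induction k rule: less_induct)
  case (less k)
  have IH: "G j" if "j < k" for j using less.IH[OF that] that less.prems by simp
  have sk: "arr (s k)" "sr (s k) = A k" "tg (s k) = X" using sA less.prems by auto
  have rk: "arr (r k)" "sr (r k) = X" "tg (r k) = A k" using rA less.prems by auto
  have Ak: "ob (A k)" using sk arr_obj(1)[of "s k"] by simp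
  show "G k"
  proof (cases "k = 0")
    case True
    have t0: "t 0 = s 0" by (rule gs_0)
    have "r j \<cdot> t 0 = zr (A 0) (A j)" if "0 < j" "j < n" for j using rs[of j 0] that less.prems True t0 by simp
    moreover have "r 0 \<cdot> t 0 = one (A 0)" using rs[of 0 0] less.prems True t0 by simp
    moreover have "closed_mono C (t 0)"
      using split_closed[of "s 0" "r 0"] sk rk rs[of 0 0] less.prems True t0 by simp
    ultimately show ?thesis unfolding G_def using True sk t0 by auto
  next
    case False
    note S = Sg_facts[OF less.prems IH]
    have tk: "t k = s k \<ominus> Sg k" using t_step False less.prems by simp
    have ts: "arr (t k)" "sr (t k) = A k" "tg (t k) = X" unfolding tk using sk S by auto
    have up: "r j \<cdot> t k = zr (A k) (A j)" if j: "k < j" "j < n" for j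
    proof -
      have rj: "arr (r j)" "sr (r j) = X" "tg (r j) = A j" using rA j by auto
      have a1: "r j \<cdot> s k = zr (A k) (A j)" using rs[of j k] j less.prems by simp
      have a2: "r j \<cdot> Sg k = zr (A k) (A j)"
        using S(5)[of "r j"] rj IH j unfolding G_def by auto
      have e: "r j \<cdot> t k = r j \<cdot> s k \<ominus> r j \<cdot> Sg k" unfolding tk
        by (rule comp_sub_l) (use sk S rj in auto)
      have Aj: "ob (A j)" using rj arr_obj(2)[of "r j"] by simp
      then show ?thesis using e a1 a2 Ak rj by simp
    qed
    have diag: "r k \<cdot> t k = one (A k)"
    proof -
      have a1: "r k \<cdot> s k = one (A k)" using rs[of k k] less.prems by simp
      have a2: "r k \<cdot> Sg k = zr (A k) (A k)"
        using S(5)[of "r k"] rk IH less.prems unfolding G_def by auto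
      have "r k \<cdot> t k = r k \<cdot> s k \<ominus> r k \<cdot> Sg k" unfolding tk
        by (rule comp_sub_l) (use sk S rk in auto)
      then show ?thesis using a1 a2 Ak by simp
    qed
    have cm: "closed_mono C (t k)" using split_closed[of "t k" "r k"] ts rk diag by simp
    have orth: "st (t i) \<cdot> t k = zr (A k) (A i)" if i: "i < k" for i
    proof -
      have Gi: "G i" using IH i by simp
      have ti: "arr (t i)" "sr (t i) = A i" "tg (t i) = X" "closed_mono C (t i)" using Gi unfolding G_def by auto
      have Ai: "ob (A i)" using ti arr_obj(1)[of "t i"] by simp
      define F where "F = (\<lambda>j. st (t i) \<cdot> (proj_mor C (t j) \<cdot> s k))"
      have "st (t i) \<cdot> Sg k = sm (A k) (tg (st (t i))) (map (\<lambda>f. st (t i) \<cdot> f) (map (\<lambda>j. proj_mor C (t j) \<cdot> s k) [0..<k]))"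
        unfolding Sg_def using comp_sum_l[OF Ak _ _ S(1), of "st (t i)"] ti by simp
      also have "\<dots> = sm (A k) (A i) (map F [0..<k])" unfolding F_def using ti by (simp add: o_def)
      also have "\<dots> = F i"
      proof (rule sum_single)
        show "ob (A k)" "ob (A i)" "i < k" using Ak Ai i by auto
        fix j assume j: "j < k"
        have Gj: "G j" using IH j by simp
        have tj: "arr (t j)" "sr (t j) = A j" "tg (t j) = X" "closed_mono C (t j)" using Gj unfolding G_def by auto
        note p = proj_facts[OF tj(4)]
        show "arr (F j) \<and> sr (F j) = A k \<and> tg (F j) = A i" unfolding F_def using p tj ti sk by auto
        assume ji: "j \<noteq> i"
        have ortho: "st (t i) \<cdot> t j = zr (A j) (A i)"
        proof (cases "i < j")
          case True then show ?thesis using Gj unfolding G_def by auto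
        next
          case False
          then have "j < i" using ji by simp
          then have "st (t j) \<cdot> t i = zr (A i) (A j)" using Gi unfolding G_def by auto
          then have "st (st (t j) \<cdot> t i) = zr (A j) (A i)" using Ai tj arr_obj(1)[of "t j"] by simp
          then show ?thesis using ti tj by simp
        qed
        have "F j = (st (t i) \<cdot> t j) \<cdot> ((inv_mor C (st (t j) \<cdot> t j) \<cdot> st (t j)) \<cdot> s k)"
          unfolding F_def p(9) using p tj ti sk by (simp add: assoc)
        also have "\<dots> = zr (A k) (A i)" unfolding ortho using p tj ti sk Ai by simp
        finally show "F j = zr (A k) (A i)" .
      qed
      also have "F i = st (t i) \<cdot> s k"
      proof -
        note p = proj_facts[OF ti(4)]
        have "F i = (st (t i) \<cdot> proj_mor C (t i)) \<cdot> s k" unfolding F_def using p(1-3) ti sk by (simp add: assoc)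
        then show ?thesis using p(5) by simp
      qed
      finally have e: "st (t i) \<cdot> Sg k = st (t i) \<cdot> s k" .
      have "st (t i) \<cdot> t k = st (t i) \<cdot> s k \<ominus> st (t i) \<cdot> Sg k" unfolding tk
        by (rule comp_sub_l) (use sk S ti in auto)
      then show ?thesis using e ti sk by simp
    qed
    show ?thesis unfolding G_def using ts up diag cm orth by auto
  qed
qed


lemma t_facts: assumes "k < n" shows "arr (t k)" "sr (t k) = A k" "tg (t k) = X" "closed_mono C (t k)"
  using G_all[OF assms] unfolding G_def by auto

lemma orth: assumes "j < n" "k < n" "j \<noteq> k" shows "st (t j) \<cdot> t k = zr (A k) (A j)"
proof (cases "j < k")
  case True then show ?thesis using G_all[OF assms(2)] unfolding G_def by auto
next
  case False
  then have "k < j" using assms by simp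
  then have e: "st (t k) \<cdot> t j = zr (A j) (A k)" using G_all[OF assms(1)] unfolding G_def by auto
  have Ak: "ob (A k)" "ob (A j)" using t_facts[OF assms(2)] t_facts[OF assms(1)] arr_obj(1)[of "t k"] arr_obj(1)[of "t j"] by auto
  have "st (t j) \<cdot> t k = st (st (t k) \<cdot> t j)" using t_facts[OF assms(2)] t_facts[OF assms(1)] by simp
  also have "\<dots> = zr (A k) (A j)" using e Ak by simp
  finally show ?thesis .
qed

lemma s_dec: assumes k: "k < n" shows "s k = t k \<oplus> Sg k"
proof (cases "k = 0")
  case True
  have "Sg k = zr (A 0) X" unfolding Sg_def True by simp
  then show ?thesis using True gs_0[of C s] sA[OF k] by simp
next
  case False
  have S: "arr (Sg k)" "sr (Sg k) = A k" "tg (Sg k) = X" using Sg_facts[OF k G_all] k by auto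
  show ?thesis using t_step[of k] False k sub_add[of "s k" "Sg k"] sA[OF k] S by simp
qed

lemma fac_Sg:
  assumes v: "arr v" "tg v = X" and k: "k < n" and ft: "\<And>j. j < k \<Longrightarrow> fac v (t j)"
  shows "fac v (Sg k)"
proof -
  have ty: "typed (A k) X (map (\<lambda>j. proj_mor C (t j) \<cdot> s k) [0..<k])" using Sg_facts[OF k G_all] k by auto
  have Ak: "ob (A k)" using sA[OF k] arr_obj(1)[of "s k"] by simp
  have "fac v (sm (A k) (tg v) (map (\<lambda>j. proj_mor C (t j) \<cdot> s k) [0..<k]))"
  proof (rule fac_sum[OF v(1) Ak])
    show "typed (A k) (tg v) (map (\<lambda>j. proj_mor C (t j) \<cdot> s k) [0..<k])" using ty v by simp
    fix f assume "f \<in> set (map (\<lambda>j. proj_mor C (t j) \<cdot> s k) [0..<k])"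
    then obtain j where j: "j < k" and f: "f = proj_mor C (t j) \<cdot> s k" by auto
    have jn: "j < n" using j k by simp
    note tj = t_facts[OF jn]
    note p = proj_facts[OF tj(4)]
    have "f = t j \<cdot> ((inv_mor C (st (t j) \<cdot> t j) \<cdot> st (t j)) \<cdot> s k)"
      unfolding f p(9) using p(6-8) tj sA[OF k] by (simp add: assoc)
    also have "fac v \<dots>" by (rule fac_comp) (use v tj p(6-8) sA[OF k] ft[OF j] in auto)
    finally show "fac v f" .
  qed
  then show ?thesis unfolding Sg_def using v by simp
qed

lemma t_to_s:
  assumes v: "arr v" "tg v = X" and m: "m \<le> n" and ft: "\<And>j. j < m \<Longrightarrow> fac v (t j)" and j: "j < m"
  shows "fac v (s j)"
proof -
  have jn: "j < n" using j m by simp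
  have S: "arr (Sg j)" "sr (Sg j) = A j" "tg (Sg j) = X" using Sg_facts[OF jn G_all] jn by auto
  have "fac v (t j \<oplus> Sg j)"
    by (rule fac_add) (use v t_facts[OF jn] S ft j fac_Sg[OF v jn] in auto)
  then show ?thesis using s_dec[OF jn] by simp
qed

lemma s_to_t:
  assumes v: "arr v" "tg v = X" and m: "m \<le> n" and fs: "\<And>j. j < m \<Longrightarrow> fac v (s j)"
  shows "j < m \<Longrightarrow> fac v (t j)"
proof (induction j rule: less_induct)
  case (less j)
  have jn: "j < n" using less.prems m by simp
  show ?case
  proof (cases "j = 0")
    case True then show ?thesis using gs_0[of C s] fs less.prems by simp
  next
    case False
    have S: "arr (Sg j)" "sr (Sg j) = A j" "tg (Sg j) = X" using Sg_facts[OF jn G_all] jn by auto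
    have "fac v (s j \<ominus> Sg j)"
      by (rule fac_sub) (use v sA[OF jn] S fs less fac_Sg[OF v jn] in auto)
    then show ?thesis using t_step[of j] False jn by simp
  qed
qed

lemma subobj_fac: "subobj_le C f g \<longleftrightarrow> tg f = tg g \<and> fac g f"
  unfolding subobj_le_def fac_def hom_def by auto

lemma union:
  assumes m: "m \<le> n"
  shows "\<exists>u. is_union C X m t u \<and> is_union C X m s u"
proof -
  define P where "P = sm X X (map (\<lambda>j. proj_mor C (t j)) [0..<m])"
  have tyP: "typed X X (map (\<lambda>j. proj_mor C (t j)) [0..<m])"
    unfolding typed_map using proj_facts t_facts m by auto
  have Ps: "arr P" "sr P = X" "tg P = X" unfolding P_def using tyP X by auto
  define E where "E = one X \<ominus> P"
  have Es: "arr E" "sr E = X" "tg E = X" unfolding E_def using Ps X by auto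
  obtain u where ku: "kernel C E u" and isou: "isometry C u" using R3[OF Es(1)] by blast
  note kU = kernelD[OF ku]
  have us: "arr u" "tg u = X" using kU Es by auto
  have U: "ob (sr u)" using us by simp
  have Pt: "P \<cdot> t k = t k" if k: "k < m" for k
  proof -
    have kn: "k < n" using k m by simp
    note tk = t_facts[OF kn]
    have Ak: "ob (A k)" using tk arr_obj(1)[of "t k"] by simp
    have "P \<cdot> t k = sm (A k) X (map (\<lambda>f. f \<cdot> t k) (map (\<lambda>j. proj_mor C (t j)) [0..<m]))"
      unfolding P_def using comp_sum_r[OF X _ _ tyP, of "t k"] tk by simp
    also have "\<dots> = sm (A k) X (map (\<lambda>j. proj_mor C (t j) \<cdot> t k) [0..<m])" by (simp add: o_def)
    also have "\<dots> = proj_mor C (t k) \<cdot> t k"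
    proof (rule sum_single[OF Ak X k])
      fix j assume j: "j < m"
      have jn: "j < n" using j m by simp
      note tj = t_facts[OF jn]
      note p = proj_facts[OF tj(4)]
      show "arr (proj_mor C (t j) \<cdot> t k) \<and> sr (proj_mor C (t j) \<cdot> t k) = A k \<and> tg (proj_mor C (t j) \<cdot> t k) = X"
        using p(1-3) tj tk by auto
      assume jk: "j \<noteq> k"
      have Aj: "ob (A j)" using tj arr_obj(1)[of "t j"] by simp
      have iv: "arr (inv_mor C (st (t j) \<cdot> t j))" "sr (inv_mor C (st (t j) \<cdot> t j)) = A j" "tg (inv_mor C (st (t j) \<cdot> t j)) = A j"
        using inv_prop[of "st (t j) \<cdot> t j"] tj(4) tj unfolding closed_mono_def by auto
      have "proj_mor C (t j) \<cdot> t k = t j \<cdot> (inv_mor C (st (t j) \<cdot> t j) \<cdot> (st (t j) \<cdot> t k))"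
        unfolding p(9) using iv tj tk by (simp add: assoc)
      also have "\<dots> = zr (A k) X" unfolding orth[OF jn kn jk] using iv tj Ak Aj by simp
      finally show "proj_mor C (t j) \<cdot> t k = zr (A k) X" .
    qed
    also have "\<dots> = t k" using proj_facts[OF tk(4)] by simp
    finally show ?thesis .
  qed
  have ft: "fac u (t k)" if k: "k < m" for k
  proof -
    have kn: "k < n" using k m by simp
    note tk = t_facts[OF kn]
    have "E \<cdot> t k = one X \<cdot> t k \<ominus> P \<cdot> t k" unfolding E_def by (rule comp_sub_r) (use Ps X tk in auto)
    then have "E \<cdot> t k = zr (sr (t k)) (tg E)" using Pt[OF k] tk Es by simp
    then obtain h where "arr h" "sr h = sr (t k)" "tg h = sr u" "u \<cdot> h = t k"
      using kU(5)[of "t k"] tk Es by auto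
    then show ?thesis by (rule facI)
  qed
  have fs: "fac u (s k)" if k: "k < m" for k by (rule t_to_s[OF us m ft k])
  have minimal: "fac v u" if v: "arr v" "tg v = X" and fv: "\<And>k. k < m \<Longrightarrow> fac v (t k)" for v
  proof -
    have "E \<cdot> u = one X \<cdot> u \<ominus> P \<cdot> u" unfolding E_def by (rule comp_sub_r) (use Ps X us in auto)
    then have "u \<ominus> P \<cdot> u = zr (sr u) X" using kU us Es by simp
    then have uP: "u = P \<cdot> u" using sub_eq0[of u "P \<cdot> u"] us Ps by simp
    have "P \<cdot> u = sm (sr u) X (map (\<lambda>f. f \<cdot> u) (map (\<lambda>j. proj_mor C (t j)) [0..<m]))"
      unfolding P_def using comp_sum_r[OF X _ _ tyP, of u] us by simp
    also have "\<dots> = sm (sr u) (tg v) (map (\<lambda>j. proj_mor C (t j) \<cdot> u) [0..<m])" using v by (simp add: o_def)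
    also have "fac v \<dots>"
    proof (rule fac_sum[OF v(1) U])
      show "typed (sr u) (tg v) (map (\<lambda>j. proj_mor C (t j) \<cdot> u) [0..<m])"
        unfolding typed_map using proj_facts t_facts m us v by auto
      fix f assume "f \<in> set (map (\<lambda>j. proj_mor C (t j) \<cdot> u) [0..<m])"
      then obtain j where j: "j < m" and f: "f = proj_mor C (t j) \<cdot> u" by auto
      have jn: "j < n" using j m by simp
      note tj = t_facts[OF jn]
      note p = proj_facts[OF tj(4)]
      have "f = t j \<cdot> ((inv_mor C (st (t j) \<cdot> t j) \<cdot> st (t j)) \<cdot> u)"
        unfolding f p(9) using p(6-8) tj us by (simp add: assoc)
      also have "fac v \<dots>" by (rule fac_comp) (use v tj p(6-8) us fv[OF j] in auto)
      finally show "fac v f" .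
    qed
    finally show ?thesis using uP by simp
  qed
  have monou: "mono C u" by (rule iso_mono[OF isou])
  have U1: "is_union C X m t u"
    unfolding is_union_def subobj_fac
  proof (intro conjI)
    show "mono C u" "tgt C u = X" using monou us by auto
    show "\<forall>k<m. tg (t k) = tg u \<and> fac u (t k)" using ft t_facts m us by auto
    show "\<forall>v. mono C v \<and> tgt C v = X \<and> (\<forall>k<m. tg (t k) = tg v \<and> fac v (t k)) \<longrightarrow> tg u = tg v \<and> fac v u"
    proof (intro allI impI)
      fix v assume v: "mono C v \<and> tgt C v = X \<and> (\<forall>k<m. tg (t k) = tg v \<and> fac v (t k))"
      have "arr v" using v unfolding mono_def by auto
      then show "tg u = tg v \<and> fac v u" using minimal[of v] v us by auto
    qed
  qed
  have U2: "is_union C X m s u"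
    unfolding is_union_def subobj_fac
  proof (intro conjI)
    show "mono C u" "tgt C u = X" using monou us by auto
    show "\<forall>k<m. tg (s k) = tg u \<and> fac u (s k)" using fs sA m us by auto
    show "\<forall>v. mono C v \<and> tgt C v = X \<and> (\<forall>k<m. tg (s k) = tg v \<and> fac v (s k)) \<longrightarrow> tg u = tg v \<and> fac v u"
    proof (intro allI impI)
      fix v assume v: "mono C v \<and> tgt C v = X \<and> (\<forall>k<m. tg (s k) = tg v \<and> fac v (s k))"
      have av: "arr v" using v unfolding mono_def by auto
      have "fac v (t k)" if "k < m" for k using s_to_t[OF av _ m, of k] v that by auto
      then show "tg u = tg v \<and> fac v u" using minimal[of v] v us av by auto
    qed
  qed
  show ?thesis using U1 U2 by blast
qed

end
end

theorem proposition4p4: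
  fixes C :: "('o, 'm) starcat" and n :: nat and A :: "nat \<Rightarrow> 'o" and X :: 'o
    and s :: "nat \<Rightarrow> 'm"
  assumes "pre_hilbert C"
    and "X \<in> Obj C"
    and "split_cospan C n A X s"
  shows "orthogonal_cospan C n A X (gram_schmidt C s)
    \<and> (\<forall>k<n. closed_mono C (gram_schmidt C s k))
    \<and> (\<forall>m. 1 \<le> m \<and> m \<le> n \<longrightarrow>
          (\<exists>u. is_union C X m (gram_schmidt C s) u \<and> is_union C X m s u))"
proof -
  interpret PH C by (rule PH.intro) (rule assms(1))
  obtain r where wc: "wide_cospan C n A X s" and r: "\<forall>k<n. r k \<in> hom C X (A k)"
    and rs0: "\<forall>k<n. \<forall>j<n. comp C (r k) (s j) = (if j = k then idm C (A k) else zm C (A j) (A k))"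
    using assms(3) unfolding split_cospan_def by blast
  have sA: "\<And>k. k < n \<Longrightarrow> arr (s k) \<and> sr (s k) = A k \<and> tg (s k) = X"
    using wc unfolding wide_cospan_def hom_def by auto
  have rA: "\<And>k. k < n \<Longrightarrow> arr (r k) \<and> sr (r k) = X \<and> tg (r k) = A k"
    using r unfolding hom_def by auto
  have rs: "\<And>k j. k < n \<Longrightarrow> j < n \<Longrightarrow> r k \<cdot> s j = (if j = k then one (A k) else zr (A j) (A k))"
    using rs0 by blast
  note tf = t_facts[OF assms(2) sA rA rs]
  note ot = orth[OF assms(2) sA rA rs]
  note un = union[OF assms(2) sA rA rs]
  have "orthogonal_cospan C n A X (gram_schmidt C s)"
    unfolding orthogonal_cospan_def wide_cospan_def hom_def using tf ot by auto
  moreover have "\<forall>k<n. closed_mono C (gram_schmidt C s k)" using tf by auto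
  moreover have "\<forall>m. 1 \<le> m \<and> m \<le> n \<longrightarrow> (\<exists>u. is_union C X m (gram_schmidt C s) u \<and> is_union C X m s u)"
    using un by auto
  ultimately show ?thesis by blast
qed

end
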